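(* Let $\mathcal{G}$ be a group prevariety over a finite alphabet $A$. Then $\mathit{SF}(\mathcal{G}) = \mathrm{FO}(<,\mathbb{P}_{\mathcal{G}})$.
   Context: Fix a finite alphabet $A$. A prevariety is a class of regular languages over $A$ containing $\emptyset$ and $A^*$, closed under union, intersection, complement, and under the quotients $u^{-1}L=\{w\mid uw\in L\}$ and $Lu^{-1}=\{w\mid wu\in L\}$. A group prevariety is a prevariety all of whose languages are recognized by morphisms into finite groups. $\mathit{SF}(\mathcal{G})$ is the least class containing $\mathcal{G}$ and all $\{a\}$ ($a\in A$), closed under union, complement and concatenation. A word $w=a_1\cdots a_n$ is viewed as a structure with domain $\{0,\dots,n+1\}$; positions $1,\dots,n$ are labeled $a_1,\dots,a_n$ and $0,n+1$ unlabeled; for $i<j$, $w(i,j)=a_{i+1}\cdots a_{j-1}$. First-order formulas use variables over positions, constants $\mathit{min},\mathit{max}$ (interpreted as $0$, $n+1$), equality, the signature's predicates, Boolean connectives and quantifiers. Label predicates $a(x)$ hold iff position $x$ has label $a$. $\mathrm{FO}(<,\mathbb{P}_{\mathcal{G}})$ is the class of languages defined by first-order sentences using the label predicates, the linear order $<$ on positions, and the unary predicates $P_L$ for $L\in\mathcal{G}$, where $P_L(i)$ holds iff $0<i$ and $w(0,i)\in L$. *)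

theory Defs
  imports Main "HOL-Algebra.Group"
begin

section \<open>Words and languages over an alphabet 'a (the alphabet is the type UNIV)\<close>

type_synonym 'a lang = "'a list set"

definition regular :: "'a lang \<Rightarrow> bool" where
  "regular L \<longleftrightarrow> (\<exists>(n::nat) (\<delta>::nat \<Rightarrow> 'a \<Rightarrow> nat) (F::nat set).
      0 < n \<and> (\<forall>q<n. \<forall>a. \<delta> q a < n) \<and> F \<subseteq> {0..<n} \<and>
      L = {w. foldl \<delta> 0 w \<in> F})"

definition lquot :: "'a list \<Rightarrow> 'a lang \<Rightarrow> 'a lang" where
  "lquot u L = {w. u @ w \<in> L}"

definition rquot :: "'a lang \<Rightarrow> 'a list \<Rightarrow> 'a lang" where
  "rquot L u = {w. w @ u \<in> L}"

definition prevariety :: "'a lang set \<Rightarrow> bool" where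
  "prevariety C \<longleftrightarrow>
     (\<forall>L\<in>C. regular L) \<and> {} \<in> C \<and> UNIV \<in> C \<and>
     (\<forall>K\<in>C. \<forall>L\<in>C. K \<union> L \<in> C) \<and>
     (\<forall>K\<in>C. \<forall>L\<in>C. K \<inter> L \<in> C) \<and>
     (\<forall>L\<in>C. - L \<in> C) \<and>
     (\<forall>L\<in>C. \<forall>u. lquot u L \<in> C) \<and>
     (\<forall>L\<in>C. \<forall>u. rquot L u \<in> C)"

definition word_hom :: "('g, 'b) monoid_scheme \<Rightarrow> ('a \<Rightarrow> 'g) \<Rightarrow> 'a list \<Rightarrow> 'g" where
  "word_hom G h w = foldr (\<lambda>a x. h a \<otimes>\<^bsub>G\<^esub> x) w \<one>\<^bsub>G\<^esub>"

text \<open>L is recognized by a morphism into a finite group (any finite group is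
  isomorphic to one whose carrier consists of natural numbers).\<close>
definition group_recognized :: "'a lang \<Rightarrow> bool" where
  "group_recognized L \<longleftrightarrow> (\<exists>(G::nat monoid) h F.
      group G \<and> finite (carrier G) \<and> (\<forall>a. h a \<in> carrier G) \<and>
      F \<subseteq> carrier G \<and> L = {w. word_hom G h w \<in> F})"

definition group_prevariety :: "'a lang set \<Rightarrow> bool" where
  "group_prevariety C \<longleftrightarrow> prevariety C \<and> (\<forall>L\<in>C. group_recognized L)"

definition conc :: "'a lang \<Rightarrow> 'a lang \<Rightarrow> 'a lang" where
  "conc K L = {u @ v | u v. u \<in> K \<and> v \<in> L}"

inductive_set SF :: "'a lang set \<Rightarrow> 'a lang set" for G :: "'a lang set" where
  base: "L \<in> G \<Longrightarrow> L \<in> SF G"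
| letter: "{[a]} \<in> SF G"
| union: "K \<in> SF G \<Longrightarrow> L \<in> SF G \<Longrightarrow> K \<union> L \<in> SF G"
| compl: "L \<in> SF G \<Longrightarrow> - L \<in> SF G"
| concat: "K \<in> SF G \<Longrightarrow> L \<in> SF G \<Longrightarrow> conc K L \<in> SF G"

datatype fo_term = Var nat | Min | Max

datatype 'a fo =
    Eq fo_term fo_term
  | Less fo_term fo_term
  | Lab 'a fo_term
  | Pred "'a lang" fo_term
  | Neg "'a fo"
  | Conj "'a fo" "'a fo"
  | Disj "'a fo" "'a fo"
  | Ex nat "'a fo"
  | All nat "'a fo"

fun tvars :: "fo_term \<Rightarrow> nat set" where
  "tvars (Var x) = {x}"
| "tvars Min = {}"
| "tvars Max = {}"

fun free_vars :: "'a fo \<Rightarrow> nat set" where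
  "free_vars (Eq s t) = tvars s \<union> tvars t"
| "free_vars (Less s t) = tvars s \<union> tvars t"
| "free_vars (Lab a t) = tvars t"
| "free_vars (Pred L t) = tvars t"
| "free_vars (Neg \<phi>) = free_vars \<phi>"
| "free_vars (Conj \<phi> \<psi>) = free_vars \<phi> \<union> free_vars \<psi>"
| "free_vars (Disj \<phi> \<psi>) = free_vars \<phi> \<union> free_vars \<psi>"
| "free_vars (Ex x \<phi>) = free_vars \<phi> - {x}"
| "free_vars (All x \<phi>) = free_vars \<phi> - {x}"

fun preds :: "'a fo \<Rightarrow> 'a lang set" where
  "preds (Eq s t) = {}"
| "preds (Less s t) = {}"
| "preds (Lab a t) = {}"
| "preds (Pred L t) = {L}"
| "preds (Neg \<phi>) = preds \<phi>"
| "preds (Conj \<phi> \<psi>) = preds \<phi> \<union> preds \<psi>"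
| "preds (Disj \<phi> \<psi>) = preds \<phi> \<union> preds \<psi>"
| "preds (Ex x \<phi>) = preds \<phi>"
| "preds (All x \<phi>) = preds \<phi>"

text \<open>A word w = a_1...a_n has domain {0..n+1}; min = 0, max = n+1.\<close>
fun tval :: "'a list \<Rightarrow> (nat \<Rightarrow> nat) \<Rightarrow> fo_term \<Rightarrow> nat" where
  "tval w \<sigma> (Var x) = \<sigma> x"
| "tval w \<sigma> Min = 0"
| "tval w \<sigma> Max = length w + 1"

text \<open>Infix w(i,j) = a_(i+1) ... a_(j-1) for i < j.\<close>
definition infix_word :: "'a list \<Rightarrow> nat \<Rightarrow> nat \<Rightarrow> 'a list" where
  "infix_word w i j = take (j - i - 1) (drop i w)"

fun sat :: "'a list \<Rightarrow> (nat \<Rightarrow> nat) \<Rightarrow> 'a fo \<Rightarrow> bool" where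
  "sat w \<sigma> (Eq s t) \<longleftrightarrow> tval w \<sigma> s = tval w \<sigma> t"
| "sat w \<sigma> (Less s t) \<longleftrightarrow> tval w \<sigma> s < tval w \<sigma> t"
| "sat w \<sigma> (Lab a t) \<longleftrightarrow> (let i = tval w \<sigma> t in 1 \<le> i \<and> i \<le> length w \<and> w ! (i - 1) = a)"
| "sat w \<sigma> (Pred L t) \<longleftrightarrow> (let i = tval w \<sigma> t in 0 < i \<and> infix_word w 0 i \<in> L)"
| "sat w \<sigma> (Neg \<phi>) \<longleftrightarrow> \<not> sat w \<sigma> \<phi>"
| "sat w \<sigma> (Conj \<phi> \<psi>) \<longleftrightarrow> sat w \<sigma> \<phi> \<and> sat w \<sigma> \<psi>"
| "sat w \<sigma> (Disj \<phi> \<psi>) \<longleftrightarrow> sat w \<sigma> \<phi> \<or> sat w \<sigma> \<psi>"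
| "sat w \<sigma> (Ex x \<phi>) \<longleftrightarrow> (\<exists>i\<le>length w + 1. sat w (\<sigma>(x := i)) \<phi>)"
| "sat w \<sigma> (All x \<phi>) \<longleftrightarrow> (\<forall>i\<le>length w + 1. sat w (\<sigma>(x := i)) \<phi>)"

definition lang_of :: "'a fo \<Rightarrow> 'a lang" where
  "lang_of \<phi> = {w. sat w (\<lambda>_. 0) \<phi>}"

definition FO_less_P :: "'a lang set \<Rightarrow> 'a lang set" where
  "FO_less_P G = {lang_of \<phi> | \<phi>. free_vars \<phi> = {} \<and> preds \<phi> \<subseteq> G}"

end

theory Submission
  imports Defs "HOL-Algebra.Multiplicative_Group"
begin

lemma SF_empty: "group_prevariety G \<Longrightarrow> {} \<in> SF G"
  by (auto simp: group_prevariety_def prevariety_def intro: SF.base)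

lemma SF_UNIV: "group_prevariety G \<Longrightarrow> UNIV \<in> SF G"
  using SF.compl[OF SF_empty] by fastforce

lemma SF_inter: "K \<in> SF G \<Longrightarrow> L \<in> SF G \<Longrightarrow> K \<inter> L \<in> SF G"
proof -
  assume "K \<in> SF G" "L \<in> SF G"
  then have "- (- K \<union> - L) \<in> SF G" by (intro SF.compl SF.union)
  then show ?thesis by simp
qed

lemma SF_Union:
  assumes "group_prevariety G" "finite I" "\<forall>i\<in>I. K i \<in> SF G"
  shows "(\<Union>i\<in>I. K i) \<in> SF G"
  using assms(2,3)
  by (induction I rule: finite_induct) (auto simp: SF_empty[OF assms(1)] intro: SF.union)

lemma SF_Nil:
  assumes "group_prevariety G" "finite (UNIV :: 'a set)"
  shows "{[]::'a list} \<in> SF G"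
proof -
  have A: "(\<Union>b\<in>UNIV. {[b::'a]}) \<in> SF G"
    by (rule SF_Union[OF assms(1,2)]) (auto intro: SF.letter)
  have "conc (\<Union>b\<in>UNIV. {[b::'a]}) UNIV \<in> SF G"
    by (rule SF.concat[OF A SF_UNIV[OF assms(1)]])
  then have "- conc (\<Union>b\<in>UNIV. {[b::'a]}) UNIV \<in> SF G" by (rule SF.compl)
  moreover have "- conc (\<Union>b\<in>UNIV. {[b::'a]}) UNIV = {[]}"
    by (auto simp: conc_def neq_Nil_conv) (metis append_Cons append_Nil)
  ultimately show ?thesis by simp
qed

section \<open>Finite unions of products\<close>

definition lprod :: "'a lang list \<Rightarrow> 'a list list set" where
  "lprod Ks = {us. length us = length Ks \<and> (\<forall>i<length Ks. us ! i \<in> Ks ! i)}"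

definition PU :: "'a lang set \<Rightarrow> nat \<Rightarrow> 'a list list set \<Rightarrow> bool" where
  "PU G n S \<longleftrightarrow> (\<exists>R. finite R \<and> (\<forall>Ks\<in>R. length Ks = n \<and> set Ks \<subseteq> SF G) \<and> S = \<Union>(lprod ` R))"

definition lists_n :: "nat \<Rightarrow> 'a list list set" where
  "lists_n n = {us. length us = n}"

lemma PU_empty: "PU G n {}"
  unfolding PU_def by (rule exI[of _ "{}"]) auto

lemma PU_lprod: "length Ks = n \<Longrightarrow> set Ks \<subseteq> SF G \<Longrightarrow> PU G n (lprod Ks)"
  unfolding PU_def by (rule exI[of _ "{Ks}"]) auto

lemma PU_union: "PU G n S \<Longrightarrow> PU G n T \<Longrightarrow> PU G n (S \<union> T)"
  unfolding PU_def
proof (elim exE conjE)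
  fix R R' assume "finite R" "\<forall>Ks\<in>R. length Ks = n \<and> set Ks \<subseteq> SF G" "S = \<Union> (lprod ` R)"
    "finite R'" "\<forall>Ks\<in>R'. length Ks = n \<and> set Ks \<subseteq> SF G" "T = \<Union> (lprod ` R')"
  then show "\<exists>R. finite R \<and> (\<forall>Ks\<in>R. length Ks = n \<and> set Ks \<subseteq> SF G) \<and> S \<union> T = \<Union> (lprod ` R)"
    by (intro exI[of _ "R \<union> R'"]) auto
qed

lemma PU_Union: "finite I \<Longrightarrow> (\<forall>i\<in>I. PU G n (S i)) \<Longrightarrow> PU G n (\<Union>i\<in>I. S i)"
  by (induction I rule: finite_induct) (auto intro: PU_union PU_empty)

lemma PU_subset: "PU G n S \<Longrightarrow> S \<subseteq> lists_n n"
  unfolding PU_def lists_n_def lprod_def by auto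

lemma lprod_inter: "length Ks = length Ms \<Longrightarrow>
  lprod Ks \<inter> lprod Ms = lprod (map2 (\<inter>) Ks Ms)"
  unfolding lprod_def by auto

lemma set_map2_SF: "set Ks \<subseteq> SF G \<Longrightarrow> set Ms \<subseteq> SF G \<Longrightarrow> set (map2 (\<inter>) Ks Ms) \<subseteq> SF G"
  by (auto simp: set_zip intro!: SF_inter)

lemma PU_inter: "PU G n S \<Longrightarrow> PU G n T \<Longrightarrow> PU G n (S \<inter> T)"
proof -
  assume "PU G n S" "PU G n T"
  then obtain R R' where R: "finite R" "\<forall>Ks\<in>R. length Ks = n \<and> set Ks \<subseteq> SF G" "S = \<Union> (lprod ` R)"
    and R': "finite R'" "\<forall>Ks\<in>R'. length Ks = n \<and> set Ks \<subseteq> SF G" "T = \<Union> (lprod ` R')"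
    unfolding PU_def by blast
  have "S \<inter> T = (\<Union>p\<in>R \<times> R'. lprod (fst p) \<inter> lprod (snd p))" using R R' by auto
  also have "PU G n \<dots>"
    using R R' by (intro PU_Union) (fastforce simp: lprod_inter set_zip intro!: PU_lprod SF_inter)+
  finally show ?thesis .
qed

lemma PU_all: "group_prevariety G \<Longrightarrow> PU G n (lists_n n)"
proof -
  assume G: "group_prevariety G"
  have "lists_n n = lprod (replicate n UNIV)" by (auto simp: lists_n_def lprod_def)
  moreover have "set (replicate n (UNIV::'a lang)) \<subseteq> SF G" using SF_UNIV[OF G] by (cases n) auto
  ultimately show ?thesis by (metis PU_lprod length_replicate)
qed

lemma PU_compl_lprod:
  assumes G: "group_prevariety G" and "length Ks = n" "set Ks \<subseteq> SF G"
  shows "PU G n (lists_n n - lprod Ks)"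
proof -
  have "lists_n n - lprod Ks = (\<Union>i\<in>{..<n}. lprod ((replicate n UNIV)[i := - (Ks ! i)]))"
    using assms(2) by (auto simp: lists_n_def lprod_def nth_list_update)
  also have "PU G n \<dots>"
  proof (intro PU_Union ballI PU_lprod)
    fix i assume "i \<in> {..<n}"
    then have "- (Ks ! i) \<in> SF G" using assms by (auto intro!: SF.compl)
    then show "set ((replicate n UNIV)[i := - (Ks ! i)]) \<subseteq> SF G"
      using SF_UNIV[OF G] by (auto dest: subsetD[OF set_update_subset_insert])
  qed auto
  finally show ?thesis .
qed

lemma PU_compl:
  assumes G: "group_prevariety G" and "PU G n S"
  shows "PU G n (lists_n n - S)"
proof -
  obtain R where R: "finite R" "\<forall>Ks\<in>R. length Ks = n \<and> set Ks \<subseteq> SF G" "S = \<Union> (lprod ` R)"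
    using assms(2) unfolding PU_def by blast
  have "PU G n (lists_n n - \<Union> (lprod ` R))"
    using R(1,2)
  proof (induction R rule: finite_induct)
    case empty then show ?case using PU_all[OF G] by simp
  next
    case (insert Ks R)
    have "lists_n n - \<Union> (lprod ` insert Ks R) = (lists_n n - lprod Ks) \<inter> (lists_n n - \<Union> (lprod ` R))"
      by auto
    then show ?case using insert PU_compl_lprod[OF G] by (auto intro!: PU_inter)
  qed
  then show ?thesis using R by simp
qed


section \<open>Group-recognized languages in a group prevariety\<close>

lemma word_hom_closed: "monoid M \<Longrightarrow> (\<forall>a. h a \<in> carrier M) \<Longrightarrow> word_hom M h w \<in> carrier M"
  by (induction w) (auto simp: word_hom_def monoid.m_closed monoid.one_closed)

lemma word_hom_append: "monoid M \<Longrightarrow> (\<forall>a. h a \<in> carrier M) \<Longrightarrow>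
  word_hom M h (u @ v) = word_hom M h u \<otimes>\<^bsub>M\<^esub> word_hom M h v"
proof (induction u)
  case Nil then show ?case
    using word_hom_closed[OF Nil.prems] by (simp add: word_hom_def monoid.l_one)
next
  case (Cons a u)
  then show ?case
    using word_hom_closed[OF Cons.prems]
    by (simp add: word_hom_def monoid.m_assoc)
qed

lemma word_hom_pow: "monoid M \<Longrightarrow> (\<forall>a. h a \<in> carrier M) \<Longrightarrow>
  word_hom M h (concat (replicate k p)) = word_hom M h p [^]\<^bsub>M\<^esub> k"
proof (induction k)
  case 0 then show ?case by (simp add: word_hom_def)
next
  case (Suc k)
  then show ?case
    using word_hom_closed[OF Suc.prems]
    by (simp add: word_hom_append monoid.nat_pow_mult[symmetric] monoid.nat_pow_Suc2 del: nat_pow_Suc)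
qed

lemma prev_Inter:
  assumes "prevariety C" "finite F" "F \<subseteq> C"
  shows "\<Inter>F \<in> C"
  using assms(2,3) assms(1)
  by (induction F rule: finite_induct) (auto simp: prevariety_def)

locale grp_lang =
  fixes M :: "nat monoid" and h :: "'a \<Rightarrow> nat" and F :: "nat set" and L :: "'a lang"
  assumes grp: "group M" and fin: "finite (carrier M)" and hc: "\<forall>a. h a \<in> carrier M"
    and FM: "F \<subseteq> carrier M" and L_def: "L = {w. word_hom M h w \<in> F}"
begin

abbreviation "eta \<equiv> word_hom M h"

lemma mon: "monoid M" using grp by (simp add: group.is_monoid)

lemma eta_closed: "eta w \<in> carrier M" using word_hom_closed[OF mon hc] .

lemma eta_app: "eta (u @ v) = eta u \<otimes>\<^bsub>M\<^esub> eta v" using word_hom_append[OF mon hc] .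

definition pick :: "nat \<Rightarrow> 'a list" where "pick g = (SOME s. eta s = g)"

lemma pick: "eta (pick (eta s)) = eta s"
  unfolding pick_def by (rule someI_ex) blast

lemma rquot_eta: "eta s = eta s' \<Longrightarrow> rquot L s = rquot L s'"
  by (auto simp: rquot_def L_def eta_app)

lemma mem_eta: "eta s = eta s' \<Longrightarrow> (s \<in> L) = (s' \<in> L)"
  by (auto simp: L_def)

lemma lquot_eta: "eta s = eta s' \<Longrightarrow> lquot s L = lquot s' L"
  by (auto simp: lquot_def L_def eta_app)

lemma D_eq: "{u. lquot u L = lquot q L} =
   \<Inter>((\<lambda>s. if q @ s \<in> L then rquot L s else - rquot L s) ` UNIV)"
  by (auto simp: lquot_def rquot_def split: if_splits)

lemma D_in:
  assumes "prevariety C" "L \<in> C"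
  shows "{u. lquot u L = lquot q L} \<in> C"
proof -
  let ?Z = "\<lambda>s. if q @ s \<in> L then rquot L s else - rquot L s"
  have Zeq: "?Z s = ?Z (pick (eta s))" for s
  proof -
    have e: "eta (pick (eta s)) = eta s" by (rule pick)
    have "(q @ s \<in> L) = (q @ pick (eta s) \<in> L)" by (rule mem_eta) (simp add: eta_app e)
    moreover have "rquot L s = rquot L (pick (eta s))" by (rule rquot_eta) (simp add: e)
    ultimately show ?thesis by simp
  qed
  have "?Z ` UNIV \<subseteq> (\<lambda>g. ?Z (pick g)) ` carrier M"
  proof
    fix X assume "X \<in> ?Z ` UNIV"
    then obtain s where "X = ?Z s" by blast
    then show "X \<in> (\<lambda>g. ?Z (pick g)) ` carrier M"
      using Zeq[of s] eta_closed[of s] by (intro image_eqI[of _ _ "eta s"]) simp_all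
  qed
  then have "finite (?Z ` UNIV)" using fin by (rule finite_subset[OF _ finite_imageI])
  moreover have "?Z ` UNIV \<subseteq> C"
  proof
    fix X assume "X \<in> ?Z ` UNIV"
    then obtain s where "X = ?Z s" by blast
    then show "X \<in> C" using assms unfolding prevariety_def by (simp split: if_splits)
  qed
  ultimately show ?thesis unfolding D_eq by (rule prev_Inter[OF assms(1)])
qed

lemma split2:
  "\<exists>Q. finite Q \<and> (\<forall>u v. u @ v \<in> L \<longleftrightarrow> (\<exists>q\<in>Q. u \<in> {u. lquot u L = lquot q L} \<and> v \<in> lquot q L))"
proof (intro exI conjI allI)
  show "finite (pick ` carrier M)" using fin by simp
  fix u v
  show "u @ v \<in> L \<longleftrightarrow> (\<exists>q\<in>pick ` carrier M. u \<in> {u. lquot u L = lquot q L} \<and> v \<in> lquot q L)"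
  proof
    assume "u @ v \<in> L"
    then show "\<exists>q\<in>pick ` carrier M. u \<in> {u. lquot u L = lquot q L} \<and> v \<in> lquot q L"
    proof (intro bexI[of _ "pick (eta u)"] conjI CollectI)
      show "lquot u L = lquot (pick (eta u)) L" by (rule lquot_eta) (simp add: pick)
      then show "v \<in> lquot (pick (eta u)) L" using \<open>u @ v \<in> L\<close> by (metis lquot_def mem_Collect_eq)
      show "pick (eta u) \<in> pick ` carrier M" using eta_closed by simp
    qed
  next
    assume "\<exists>q\<in>pick ` carrier M. u \<in> {u. lquot u L = lquot q L} \<and> v \<in> lquot q L"
    then obtain q where "lquot u L = lquot q L" "v \<in> lquot q L" by blast
    then show "u @ v \<in> L" by (metis lquot_def mem_Collect_eq)
  qed
qed

lemma inv_words: "\<exists>R. finite R \<and> (\<forall>p. \<exists>r\<in>R. lquot (r @ p) L = L)"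
proof -
  define inv_w where "inv_w g = (SOME r. eta r \<otimes>\<^bsub>M\<^esub> g = \<one>\<^bsub>M\<^esub>)" for g
  have ex: "\<exists>r. eta r \<otimes>\<^bsub>M\<^esub> eta p = \<one>\<^bsub>M\<^esub>" for p
  proof (intro exI)
    let ?k = "order M - 1"
    have "\<one>\<^bsub>M\<^esub> \<in> carrier M" by (simp add: mon monoid.one_closed)
    then have "order M > 0" using fin unfolding order_def by (auto simp: card_gt_0_iff)
    then have o: "order M = Suc ?k" by simp
    have "eta (concat (replicate ?k p)) \<otimes>\<^bsub>M\<^esub> eta p = eta p [^]\<^bsub>M\<^esub> Suc ?k"
      by (simp only: word_hom_pow[OF mon hc, of ?k p] nat_pow_Suc)
    also have "\<dots> = eta p [^]\<^bsub>M\<^esub> order M" by (simp only: o[symmetric])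
    also have "\<dots> = \<one>\<^bsub>M\<^esub>" using group.pow_order_eq_1[OF grp eta_closed] .
    finally show "eta (concat (replicate ?k p)) \<otimes>\<^bsub>M\<^esub> eta p = \<one>\<^bsub>M\<^esub>" .
  qed
  show ?thesis
  proof (intro exI conjI allI)
    show "finite (inv_w ` carrier M)" using fin by simp
    fix p
    have "eta (inv_w (eta p)) \<otimes>\<^bsub>M\<^esub> eta p = \<one>\<^bsub>M\<^esub>"
      unfolding inv_w_def using ex[of p] by (rule someI_ex)
    then have "eta (inv_w (eta p) @ p) = eta []" by (simp only: eta_app) (simp add: word_hom_def)
    then have "lquot (inv_w (eta p) @ p) L = lquot [] L" by (rule lquot_eta)
    moreover have "lquot [] L = L" by (simp add: lquot_def)
    ultimately show "\<exists>r\<in>inv_w ` carrier M. lquot (r @ p) L = L"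
      using eta_closed[of p] by blast
  qed
qed

end

lemma grp_lang_of:
  assumes "group_prevariety C" "L \<in> C"
  obtains M h F where "grp_lang M h F L"
proof -
  from assms have "group_recognized L" by (auto simp: group_prevariety_def)
  then obtain M :: "nat monoid" and h F where "group M" "finite (carrier M)" "\<forall>a. h a \<in> carrier M" "F \<subseteq> carrier M"
    "L = {w. word_hom M h w \<in> F}" unfolding group_recognized_def by blast
  then have "grp_lang M h F L" unfolding grp_lang_def by blast
  then show thesis by (rule that)
qed

lemma prev_of: "group_prevariety C \<Longrightarrow> prevariety C"
  by (simp add: group_prevariety_def)

lemma prev_lquot: "prevariety C \<Longrightarrow> L \<in> C \<Longrightarrow> lquot u L \<in> C"
  by (simp add: prevariety_def)


section \<open>Binary factorizations\<close>

definition rect :: "'a lang set \<Rightarrow> ('a list \<Rightarrow> 'a list \<Rightarrow> bool) \<Rightarrow> bool" where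
  "rect G P \<longleftrightarrow> (\<exists>R. finite R \<and> (\<forall>p\<in>R. fst p \<in> SF G \<and> snd p \<in> SF G) \<and>
      (\<forall>u v. P u v \<longleftrightarrow> (\<exists>p\<in>R. u \<in> fst p \<and> v \<in> snd p)))"

lemma rectI: "finite R \<Longrightarrow> (\<And>p. p \<in> R \<Longrightarrow> fst p \<in> SF G \<and> snd p \<in> SF G) \<Longrightarrow>
      (\<And>u v. P u v \<longleftrightarrow> (\<exists>p\<in>R. u \<in> fst p \<and> v \<in> snd p)) \<Longrightarrow> rect G P"
  unfolding rect_def by blast

lemma rectE: "rect G P \<Longrightarrow> (\<And>R. finite R \<Longrightarrow> (\<And>p. p \<in> R \<Longrightarrow> fst p \<in> SF G \<and> snd p \<in> SF G) \<Longrightarrow>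
      (\<And>u v. P u v \<longleftrightarrow> (\<exists>p\<in>R. u \<in> fst p \<and> v \<in> snd p)) \<Longrightarrow> thesis) \<Longrightarrow> thesis"
  unfolding rect_def by blast

lemma rect_or: "rect G P \<Longrightarrow> rect G Q \<Longrightarrow> rect G (\<lambda>u v. P u v \<or> Q u v)"
proof -
  assume h1: "rect G P" and h2: "rect G Q"
  obtain R where a1: "finite R" "\<And>p. p \<in> R \<Longrightarrow> fst p \<in> SF G \<and> snd p \<in> SF G"
    "\<And>u v. P u v \<longleftrightarrow> (\<exists>p\<in>R. u \<in> fst p \<and> v \<in> snd p)"
    by (rule rectE[OF h1], blast)
  obtain R' where a2: "finite R'" "\<And>p. p \<in> R' \<Longrightarrow> fst p \<in> SF G \<and> snd p \<in> SF G"
   "\<And>u v. Q u v \<longleftrightarrow> (\<exists>p\<in>R'. u \<in> fst p \<and> v \<in> snd p)"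
    by (rule rectE[OF h2], blast)
  note a = a1 a2
  show ?thesis
  proof (rule rectI[of "R \<union> R'"])
    show "finite (R \<union> R')" using a by simp
    fix p assume "p \<in> R \<union> R'" then show "fst p \<in> SF G \<and> snd p \<in> SF G" using a(2,5) by blast
  next
    fix u v show "(P u v \<or> Q u v) \<longleftrightarrow> (\<exists>p\<in>R \<union> R'. u \<in> fst p \<and> v \<in> snd p)"
      unfolding a(3,6) by blast
  qed
qed

lemma rect_and: "rect G P \<Longrightarrow> rect G Q \<Longrightarrow> rect G (\<lambda>u v. P u v \<and> Q u v)"
proof -
  assume h1: "rect G P" and h2: "rect G Q"
  obtain R where a1: "finite R" "\<And>p. p \<in> R \<Longrightarrow> fst p \<in> SF G \<and> snd p \<in> SF G"
    "\<And>u v. P u v \<longleftrightarrow> (\<exists>p\<in>R. u \<in> fst p \<and> v \<in> snd p)"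
    by (rule rectE[OF h1], blast)
  obtain R' where a2: "finite R'" "\<And>p. p \<in> R' \<Longrightarrow> fst p \<in> SF G \<and> snd p \<in> SF G"
   "\<And>u v. Q u v \<longleftrightarrow> (\<exists>p\<in>R'. u \<in> fst p \<and> v \<in> snd p)"
    by (rule rectE[OF h2], blast)
  note a = a1 a2
  let ?f = "\<lambda>q. (fst (fst q) \<inter> fst (snd q), snd (fst q) \<inter> snd (snd q))"
  show ?thesis
  proof (rule rectI[of "?f ` (R \<times> R')"])
    show "finite (?f ` (R \<times> R'))" using a by simp
    fix p assume "p \<in> ?f ` (R \<times> R')"
    then obtain q1 q2 where "q1 \<in> R" "q2 \<in> R'" "p = ?f (q1, q2)" by auto
    then show "fst p \<in> SF G \<and> snd p \<in> SF G" using a(2)[of q1] a(5)[of q2] by (auto intro!: SF_inter)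
  next
    fix u v
    show "(P u v \<and> Q u v) \<longleftrightarrow> (\<exists>p\<in>?f ` (R \<times> R'). u \<in> fst p \<and> v \<in> snd p)"
      unfolding a(3,6) by auto
  qed
qed

lemma rect_not_R:
  assumes G: "group_prevariety G"
  shows "finite R \<Longrightarrow> (\<forall>p\<in>R. fst p \<in> SF G \<and> snd p \<in> SF G) \<Longrightarrow>
     rect G (\<lambda>u v. \<not> (\<exists>p\<in>R. u \<in> fst p \<and> v \<in> snd p))"
proof (induction R rule: finite_induct)
  case empty
  show ?case by (rule rectI[of "{(UNIV,UNIV)}"]) (auto simp: SF_UNIV[OF G])
next
  case (insert q R)
  have r1: "rect G (\<lambda>u v. \<not> (u \<in> fst q \<and> v \<in> snd q))"
    using insert.prems
    by (intro rectI[of "{(-fst q,UNIV),(UNIV,-snd q)}"]) (auto simp: SF_UNIV[OF G] intro: SF.compl)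
  have "rect G (\<lambda>u v. \<not> (u \<in> fst q \<and> v \<in> snd q) \<and> \<not> (\<exists>p\<in>R. u \<in> fst p \<and> v \<in> snd p))"
    using insert r1 by (intro rect_and) auto
  then show ?case by simp
qed

lemma rect_not:
  assumes G: "group_prevariety G" and "rect G P"
  shows "rect G (\<lambda>u v. \<not> P u v)"
proof -
  obtain R where R: "finite R" "\<And>p. p \<in> R \<Longrightarrow> fst p \<in> SF G \<and> snd p \<in> SF G"
      "\<And>u v. P u v \<longleftrightarrow> (\<exists>p\<in>R. u \<in> fst p \<and> v \<in> snd p)"
    by (rule rectE[OF assms(2)], blast)
  have "rect G (\<lambda>u v. \<not> (\<exists>p\<in>R. u \<in> fst p \<and> v \<in> snd p))" using R(2) by (intro rect_not_R[OF G R(1)]) blast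
  then show ?thesis unfolding R(3) .
qed


lemma F2:
  assumes G: "group_prevariety G" and A: "finite (UNIV :: 'a set)"
  shows "K \<in> SF G \<Longrightarrow> rect G (\<lambda>u v. u @ v \<in> (K :: 'a lang))"
proof (induction K rule: SF.induct)
  case (base L)
  obtain M h F where gl: "grp_lang M h F L" using grp_lang_of[OF G base] .
  obtain Q where Q: "finite Q" "\<forall>u v. u @ v \<in> L \<longleftrightarrow> (\<exists>q\<in>Q. u \<in> {u. lquot u L = lquot q L} \<and> v \<in> lquot q L)"
    using grp_lang.split2[OF gl] by blast
  let ?f = "\<lambda>q. ({u. lquot u L = lquot q L}, lquot q L)"
  show ?case
  proof (rule rectI[of "?f ` Q"])
    show "finite (?f ` Q)" using Q by simp
    fix p assume "p \<in> ?f ` Q"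
    then obtain q where "p = ?f q" by blast
    then show "fst p \<in> SF G \<and> snd p \<in> SF G"
      using grp_lang.D_in[OF gl prev_of[OF G] base, of q] prev_lquot[OF prev_of[OF G] base, of q]
      by (auto intro: SF.base)
  next
    fix u v
    show "u @ v \<in> L \<longleftrightarrow> (\<exists>p\<in>?f ` Q. u \<in> fst p \<and> v \<in> snd p)"
      using Q(2) by auto
  qed
next
  case (letter a)
  show ?case
  proof (rule rectI[of "{({[]},{[a]}), ({[a]},{[]})}"])
    fix p assume "p \<in> {({[]},{[a]}), ({[a]},{[]})}"
    then show "fst p \<in> SF G \<and> snd p \<in> SF G" using SF_Nil[OF G A] SF.letter by auto
  next
    fix u v
    show "u @ v \<in> {[a]} \<longleftrightarrow> (\<exists>p\<in>{({[]},{[a]}), ({[a]},{[]})}. u \<in> fst p \<and> v \<in> snd p)"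
      by (cases u) auto
  qed simp
next
  case (union K L)
  then show ?case by (simp add: rect_or)
next
  case (compl L)
  then show ?case by (simp add: rect_not[OF G])
next
  case (concat K L)
  obtain R1 where R1: "finite R1" "\<And>p. p \<in> R1 \<Longrightarrow> fst p \<in> SF G \<and> snd p \<in> SF G"
     "\<And>u v. u @ v \<in> K \<longleftrightarrow> (\<exists>p\<in>R1. u \<in> fst p \<and> v \<in> snd p)"
    by (rule rectE[OF concat.IH(1)], blast)
  obtain R2 where R2: "finite R2" "\<And>p. p \<in> R2 \<Longrightarrow> fst p \<in> SF G \<and> snd p \<in> SF G"
     "\<And>u v. u @ v \<in> L \<longleftrightarrow> (\<exists>p\<in>R2. u \<in> fst p \<and> v \<in> snd p)"
    by (rule rectE[OF concat.IH(2)], blast)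
  let ?R = "(\<lambda>p. (fst p, conc (snd p) L)) ` R1 \<union> (\<lambda>p. (conc K (fst p), snd p)) ` R2"
  show ?case
  proof (rule rectI[of ?R])
    show "finite ?R" using R1 R2 by simp
    fix p assume "p \<in> ?R"
    then show "fst p \<in> SF G \<and> snd p \<in> SF G" using R1(2) R2(2) concat.hyps
      by (auto intro!: SF.concat)
  next
    fix u v
    show "u @ v \<in> conc K L \<longleftrightarrow> (\<exists>p\<in>?R. u \<in> fst p \<and> v \<in> snd p)"
    proof
      assume "u @ v \<in> conc K L"
      then obtain x y where xy: "u @ v = x @ y" "x \<in> K" "y \<in> L" unfolding conc_def by blast
      then obtain us where "(u = x @ us \<and> us @ v = y) \<or> (u @ us = x \<and> v = us @ y)"
        using append_eq_append_conv2[of u v x y] by blast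
      then show "\<exists>p\<in>?R. u \<in> fst p \<and> v \<in> snd p"
      proof
        assume h: "u = x @ us \<and> us @ v = y"
        then obtain p where p: "p \<in> R2" "us \<in> fst p" "v \<in> snd p" using R2(3) xy by blast
        have "u \<in> conc K (fst p)" using h xy(2) p(2) unfolding conc_def by blast
        then show ?thesis using p by (intro bexI[of _ "(conc K (fst p), snd p)"]) auto
      next
        assume h: "u @ us = x \<and> v = us @ y"
        then obtain p where p: "p \<in> R1" "u \<in> fst p" "us \<in> snd p" using R1(3) xy by blast
        have "v \<in> conc (snd p) L" using h xy(3) p(3) unfolding conc_def by blast
        then show ?thesis using p by (intro bexI[of _ "(fst p, conc (snd p) L)"]) auto
      qed
    next
      assume "\<exists>p\<in>?R. u \<in> fst p \<and> v \<in> snd p"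
      then obtain p where p: "p \<in> ?R" "u \<in> fst p" "v \<in> snd p" by blast
      show "u @ v \<in> conc K L"
      proof (cases "p \<in> (\<lambda>p. (fst p, conc (snd p) L)) ` R1")
        case True
        then obtain q where q: "q \<in> R1" "p = (fst q, conc (snd q) L)" by blast
        then obtain s y where sy: "v = s @ y" "s \<in> snd q" "y \<in> L" using p(3) unfolding conc_def by auto
        then have "u @ s \<in> K" using R1(3) q p(2) by auto
        moreover have "u @ v = (u @ s) @ y" using sy by simp
        ultimately show ?thesis using sy(3) unfolding conc_def by blast
      next
        case False
        then obtain q where q: "q \<in> R2" "p = (conc K (fst q), snd q)" using p(1) by blast
        then obtain x s where xs: "u = x @ s" "x \<in> K" "s \<in> fst q" using p(2) unfolding conc_def by auto
        then have "s @ v \<in> L" using R2(3) q p(3) by auto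
        moreover have "u @ v = x @ (s @ v)" using xs by simp
        ultimately show ?thesis using xs(2) unfolding conc_def by blast
      qed
    qed
  qed
qed

lemma lquot1_SF:
  assumes G: "group_prevariety G" and A: "finite (UNIV :: 'a set)" and B: "(B :: 'a lang) \<in> SF G"
  shows "{v. c # v \<in> B} \<in> SF G"
proof -
  obtain R where R: "finite R" "\<And>p. p \<in> R \<Longrightarrow> fst p \<in> SF G \<and> snd p \<in> SF G"
     "\<And>u v. u @ v \<in> B \<longleftrightarrow> (\<exists>p\<in>R. u \<in> fst p \<and> v \<in> snd p)"
    by (rule rectE[OF F2[OF G A B]], blast)
  have "{v. c # v \<in> B} = (\<Union>p\<in>{p\<in>R. [c] \<in> fst p}. snd p)"
    using R(3)[of "[c]"] by auto
  also have "\<dots> \<in> SF G" using R(1,2) by (intro SF_Union[OF G]) auto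
  finally show ?thesis .
qed

lemma F1:
  assumes G: "group_prevariety G" and A: "finite (UNIV :: 'a set)" and K: "(K :: 'a lang) \<in> SF G"
  shows "rect G (\<lambda>u v. u @ c # v \<in> K)"
proof -
  obtain R where R: "finite R" "\<And>p. p \<in> R \<Longrightarrow> fst p \<in> SF G \<and> snd p \<in> SF G"
     "\<And>u v. u @ v \<in> K \<longleftrightarrow> (\<exists>p\<in>R. u \<in> fst p \<and> v \<in> snd p)"
    by (rule rectE[OF F2[OF G A K]], blast)
  let ?f = "\<lambda>p. (fst p, {v. c # v \<in> snd p})"
  show ?thesis
  proof (rule rectI[of "?f ` R"])
    show "finite (?f ` R)" using R by simp
    fix p assume "p \<in> ?f ` R"
    then show "fst p \<in> SF G \<and> snd p \<in> SF G"
      using R(2) lquot1_SF[OF G A] by auto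
  next
    fix u v show "u @ c # v \<in> K \<longleftrightarrow> (\<exists>p\<in>?f ` R. u \<in> fst p \<and> v \<in> snd p)"
      using R(3)[of u "c # v"] by auto
  qed
qed


lemma lprod_Nil: "lprod [] = {[]}"
  by (auto simp: lprod_def)

lemma lprod_Cons_iff: "(v # vs \<in> lprod (A # Ks)) \<longleftrightarrow> v \<in> A \<and> vs \<in> lprod Ks"
proof -
  have "(\<forall>i<Suc (length Ks). (v # vs) ! i \<in> (A # Ks) ! i) \<longleftrightarrow> v \<in> A \<and> (\<forall>i<length Ks. vs ! i \<in> Ks ! i)"
    by (auto simp: less_Suc_eq_0_disj)
  then show ?thesis by (auto simp: lprod_def)
qed

lemma lprod_Nil_iff: "([] \<in> lprod Ks) \<longleftrightarrow> Ks = []"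
  by (auto simp: lprod_def)

lemma lprod_Cons: "lprod (A # Ks) = {v # vs | v vs. v \<in> A \<and> vs \<in> lprod Ks}"
  apply (rule Set.set_eqI)
  subgoal for us by (cases us) (auto simp: lprod_Cons_iff lprod_Nil_iff)
  done

lemma lprod_length: "us \<in> lprod Ks \<Longrightarrow> length us = length Ks"
  by (simp add: lprod_def)

lemma PU_cons:
  assumes "A \<in> SF G" "PU G n S"
  shows "PU G (Suc n) {v # vs | v vs. v \<in> A \<and> vs \<in> S}"
proof -
  obtain R where R: "finite R" "\<forall>Ks\<in>R. length Ks = n \<and> set Ks \<subseteq> SF G" "S = \<Union> (lprod ` R)"
    using assms(2) unfolding PU_def by blast
  have "{v # vs | v vs. v \<in> A \<and> vs \<in> S} = \<Union> (lprod ` ((#) A ` R))"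
    using R(3) by (auto simp: lprod_Cons)
  moreover have "finite ((#) A ` R)" using R(1) by simp
  moreover have "\<forall>Ks\<in>(#) A ` R. length Ks = Suc n \<and> set Ks \<subseteq> SF G" using R(2) assms(1) by auto
  ultimately show ?thesis unfolding PU_def by blast
qed

lemma lprod_take: "length Ks = k \<Longrightarrow> k \<le> n \<Longrightarrow>
   {us. length us = n \<and> take k us \<in> lprod Ks} = lprod (Ks @ replicate (n - k) UNIV)"
  by (auto simp: lprod_def nth_append min_def)

lemma PU_take:
  assumes G: "group_prevariety G" and "PU G k S" "k \<le> n"
  shows "PU G n {us. length us = n \<and> take k us \<in> S}"
proof -
  obtain R where R: "finite R" "\<forall>Ks\<in>R. length Ks = k \<and> set Ks \<subseteq> SF G" "S = \<Union> (lprod ` R)"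
    using assms(2) unfolding PU_def by blast
  let ?R = "(\<lambda>Ks. Ks @ replicate (n - k) UNIV) ` R"
  have "{us. length us = n \<and> take k us \<in> S} = (\<Union>Ks\<in>R. {us. length us = n \<and> take k us \<in> lprod Ks})"
    using R(3) by auto
  also have "\<dots> = \<Union> (lprod ` ?R)"
  proof -
    have "\<And>Ks. Ks \<in> R \<Longrightarrow> {us. length us = n \<and> take k us \<in> lprod Ks} = lprod (Ks @ replicate (n - k) UNIV)"
      using R(2) assms(3) lprod_take by blast
    then show ?thesis by auto
  qed
  finally have "{us. length us = n \<and> take k us \<in> S} = \<Union> (lprod ` ?R)" .
  moreover have "finite ?R" using R(1) by simp
  moreover have "\<forall>Ks\<in>?R. length Ks = n \<and> set Ks \<subseteq> SF G" using R(2) SF_UNIV[OF G] assms(3) by auto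
  ultimately show ?thesis unfolding PU_def by blast
qed

lemma PU_1:
  assumes G: "group_prevariety G" and "PU G 1 S"
  shows "{u. [u] \<in> S} \<in> SF G"
proof -
  obtain R where R: "finite R" "\<forall>Ks\<in>R. length Ks = 1 \<and> set Ks \<subseteq> SF G" "S = \<Union> (lprod ` R)"
    using assms(2) unfolding PU_def by blast
  have "{u. [u] \<in> S} = (\<Union>Ks\<in>R. Ks ! 0)"
    using R(2,3) by (auto simp: lprod_def)
  also have "\<dots> \<in> SF G" using R(1,2) by (intro SF_Union[OF G]) (auto simp: length_Suc_conv)
  finally show ?thesis .
qed

section \<open>Words with cut points\<close>

fun word :: "'a list \<Rightarrow> 'a list list \<Rightarrow> 'a list" where
  "word [] (u # us) = u"
| "word (c # cs) (u # us) = u @ c # word cs us"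
| "word cs [] = []"

lemma Fn:
  assumes G: "group_prevariety G" and A: "finite (UNIV :: 'a set)"
  shows "(K :: 'a lang) \<in> SF G \<Longrightarrow> PU G (Suc (length cs)) {vs. length vs = Suc (length cs) \<and> word cs vs \<in> K}"
proof (induction cs arbitrary: K)
  case Nil
  have "{vs. length vs = Suc (length []) \<and> word [] vs \<in> K} = lprod [K]"
    by (auto simp: lprod_def length_Suc_conv)
  then show ?case using Nil by (auto intro!: PU_lprod)
next
  case (Cons c cs)
  obtain R where R: "finite R" "\<And>p. p \<in> R \<Longrightarrow> fst p \<in> SF G \<and> snd p \<in> SF G"
     "\<And>u v. u @ c # v \<in> K \<longleftrightarrow> (\<exists>p\<in>R. u \<in> fst p \<and> v \<in> snd p)"
    by (rule rectE[OF F1[OF G A Cons.prems]], blast)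
  let ?S = "\<lambda>B. {vs. length vs = Suc (length cs) \<and> word cs vs \<in> B}"
  have "{vs. length vs = Suc (length (c # cs)) \<and> word (c # cs) vs \<in> K} =
     (\<Union>p\<in>R. {v # vs | v vs. v \<in> fst p \<and> vs \<in> ?S (snd p)})"
  proof (rule Set.set_eqI)
    fix us
    show "us \<in> {vs. length vs = Suc (length (c # cs)) \<and> word (c # cs) vs \<in> K} \<longleftrightarrow>
      us \<in> (\<Union>p\<in>R. {v # vs | v vs. v \<in> fst p \<and> vs \<in> ?S (snd p)})"
    proof (cases us)
      case Nil then show ?thesis by auto
    next
      case (Cons v vs)
      then show ?thesis using R(3)[of v "word cs vs"] by auto
    qed
  qed
  moreover have "PU G (Suc (length (c # cs))) (\<Union>p\<in>R. {v # vs | v vs. v \<in> fst p \<and> vs \<in> ?S (snd p)})"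
  proof (rule PU_Union[OF R(1)], rule ballI)
    fix p assume "p \<in> R"
    then have "fst p \<in> SF G" "snd p \<in> SF G" using R(2) by auto
    then show "PU G (Suc (length (c # cs))) {v # vs | v vs. v \<in> fst p \<and> vs \<in> ?S (snd p)}"
      using Cons.IH[of "snd p"] by (intro PU_cons) simp_all
  qed
  ultimately show ?case by simp
qed


definition pos :: "'a list list \<Rightarrow> nat \<Rightarrow> nat" where
  "pos us k = sum_list (map length (take k us)) + k"

lemma pos_0[simp]: "pos us 0 = 0" by (simp add: pos_def)

lemma pos_Cons_Suc[simp]: "pos (u # us) (Suc k) = length u + 1 + pos us k"
  by (simp add: pos_def)

lemma pos_mono_le: "k \<le> l \<Longrightarrow> pos us k + (l - k) \<le> pos us l"
proof -
  assume "k \<le> l"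
  then obtain t where l: "l = k + t" using le_Suc_ex by blast
  show ?thesis unfolding pos_def l take_add by simp
qed

lemma pos_less_iff[simp]: "pos us k < pos us l \<longleftrightarrow> k < l"
proof
  assume "pos us k < pos us l"
  then show "k < l" using pos_mono_le[of l k us] by (cases "l \<le> k") auto
next
  assume "k < l" then show "pos us k < pos us l" using pos_mono_le[of k l us] by simp
qed

lemma pos_eq_iff[simp]: "pos us k = pos us l \<longleftrightarrow> k = l"
  using pos_less_iff[of us k l] pos_less_iff[of us l k] by (metis nat_neq_iff)

lemma pos_ge: "k \<le> pos us k" by (simp add: pos_def)

lemma pos_len: "pos us (length us) = sum_list (map length us) + length us"
  by (simp add: pos_def)

lemma pos_nth_Suc: "j < length us \<Longrightarrow> pos us (Suc j) = pos us j + length (us ! j) + 1"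
  by (simp add: pos_def take_Suc_conv_app_nth)

lemma length_word: "length us = Suc (length cs) \<Longrightarrow> length (word cs us) = sum_list (map length us) + length cs"
proof (induction cs arbitrary: us)
  case Nil then show ?case by (cases us) auto
next
  case (Cons c cs) then show ?case by (cases us) auto
qed

lemma pos_last: "length us = Suc (length cs) \<Longrightarrow> pos us (length us) = length (word cs us) + 1"
  by (subst pos_len) (simp add: length_word)

lemma word_nth_pos:
  "length us = Suc (length cs) \<Longrightarrow> 1 \<le> k \<Longrightarrow> k \<le> length cs \<Longrightarrow> word cs us ! (pos us k - 1) = cs ! (k - 1)"
proof (induction cs arbitrary: us k)
  case Nil then show ?case by simp
next
  case (Cons c cs)
  obtain u us' where us: "us = u # us'" using Cons.prems(1) by (cases us) auto
  obtain k' where k: "k = Suc k'" using Cons.prems(2) by (cases k) auto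
  show ?case
  proof (cases "k' = 0")
    case True then show ?thesis using us k by (simp add: nth_append)
  next
    case False
    then have "1 \<le> pos us' k'" using pos_ge[of k' us'] by simp
    then have "word (c # cs) us ! (pos us k - 1) = word cs us' ! (pos us' k' - 1)"
      using us k by (simp add: nth_append)
    also have "\<dots> = cs ! (k' - 1)" using Cons.IH[of us' k'] Cons.prems us k False by simp
    finally show ?thesis using k False by simp
  qed
qed

lemma word_take_pos:
  "length us = Suc (length cs) \<Longrightarrow> 1 \<le> k \<Longrightarrow> k \<le> length us \<Longrightarrow>
   take (pos us k - 1) (word cs us) = word (take (k - 1) cs) (take k us)"
proof (induction cs arbitrary: us k)
  case Nil
  then obtain u where "us = [u]" by (auto simp: length_Suc_conv)
  then show ?case using Nil by (simp add: pos_def)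
next
  case (Cons c cs)
  obtain u us' where us: "us = u # us'" using Cons.prems(1) by (cases us) auto
  obtain k' where k: "k = Suc k'" using Cons.prems(2) by (cases k) auto
  show ?case
  proof (cases "k' = 0")
    case True then show ?thesis using us k by simp
  next
    case False
    then have p: "1 \<le> pos us' k'" using pos_ge[of k' us'] by simp
    then have "take (pos us k - 1) (word (c # cs) us) = u @ c # take (pos us' k' - 1) (word cs us')"
      using us k by (simp add: take_Cons')
    also have "\<dots> = u @ c # word (take (k' - 1) cs) (take k' us')"
      using Cons.IH[of us' k'] Cons.prems us k False by simp
    also have "\<dots> = word (take (k - 1) (c # cs)) (take k us)"
      using us k False by (cases k') auto
    finally show ?thesis .
  qed
qed

lemma pos_decomp:
  "i \<le> pos us (length us) \<Longrightarrow> (\<exists>k\<le>length us. i = pos us k) \<or>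
     (\<exists>j<length us. \<exists>u' c u''. us ! j = u' @ c # u'' \<and> i = pos us j + length u' + 1)"
proof (induction us arbitrary: i)
  case Nil then show ?case by simp
next
  case (Cons u us)
  consider "i = 0" | "1 \<le> i \<and> i \<le> length u" | "i = length u + 1" | "i > length u + 1" by linarith
  then show ?case
  proof cases
    case 1 then show ?thesis by (intro disjI1 exI[of _ 0]) simp
  next
    case 2
    have "u = take (i - 1) u @ u ! (i - 1) # drop i u" using 2
      by (metis Suc_diff_1 Suc_le_lessD id_take_nth_drop less_imp_diff_less not_le not_less_eq_eq order_less_imp_le zero_less_one le_less_trans)
    then show ?thesis using 2
      by (intro disjI2 exI[of _ 0] conjI exI[of _ "take (i - 1) u"] exI[of _ "u ! (i - 1)"] exI[of _ "drop i u"]) auto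
  next
    case 3 then show ?thesis by (intro disjI1 exI[of _ 1]) simp
  next
    case 4
    define i' where "i' = i - length u - 1"
    have i: "i = length u + 1 + i'" using 4 by (simp add: i'_def)
    have "i' \<le> pos us (length us)" using Cons.prems i by simp
    from Cons.IH[OF this] show ?thesis
    proof
      assume "\<exists>k\<le>length us. i' = pos us k"
      then obtain k where "k \<le> length us" "i' = pos us k" by blast
      then show ?thesis using i by (intro disjI1 exI[of _ "Suc k"]) simp
    next
      assume "\<exists>j<length us. \<exists>u' c u''. us ! j = u' @ c # u'' \<and> i' = pos us j + length u' + 1"
      then obtain j u' c u'' where "j < length us" "us ! j = u' @ c # u''" "i' = pos us j + length u' + 1"
        by blast
      then show ?thesis using i by (intro disjI2 exI[of _ "Suc j"]) auto
    qed
  qed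
qed


definition ins :: "nat \<Rightarrow> 'a list \<Rightarrow> 'a list \<Rightarrow> 'a list list \<Rightarrow> 'a list list" where
  "ins j u' u'' us = take j us @ u' # u'' # drop (Suc j) us"

definition cins :: "nat \<Rightarrow> 'a \<Rightarrow> 'a list \<Rightarrow> 'a list" where
  "cins j c cs = take j cs @ c # drop j cs"

definition sh :: "nat \<Rightarrow> nat \<Rightarrow> nat" where
  "sh j k = (if k \<le> j then k else Suc k)"

definition pw :: "'a list list \<Rightarrow> 'a list \<Rightarrow> 'a list" where
  "pw xs cxs = concat (map2 (\<lambda>u c. u @ [c]) xs cxs)"

lemma word_app: "length xs = length cxs \<Longrightarrow> word (cxs @ cys) (xs @ ys) = pw xs cxs @ word cys ys"
proof (induction xs arbitrary: cxs)
  case Nil then show ?case by (simp add: pw_def)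
next
  case (Cons x xs)
  then obtain c cxs' where "cxs = c # cxs'" by (cases cxs) auto
  then show ?case using Cons by (simp add: pw_def)
qed

lemma word_split_hd: "word cs ((a @ b) # ys) = a @ word cs (b # ys)"
  by (cases cs) auto

lemma pos_app_le: "k \<le> length xs \<Longrightarrow> pos (xs @ ys) k = pos xs k"
  by (simp add: pos_def)

lemma ins_decomp:
  assumes "length xs = j"
  shows "ins j u' u'' (xs @ u # ys) = xs @ u' # u'' # ys"
  using assms by (simp add: ins_def)

lemma ins_facts:
  assumes j: "j < length us" and len: "length us = Suc (length cs)" and uj: "us ! j = u' @ c # u''"
  shows "word (cins j c cs) (ins j u' u'' us) = word cs us"
    and "\<And>k. pos (ins j u' u'' us) (sh j k) = pos us k"
    and "pos (ins j u' u'' us) (Suc j) = pos us j + length u' + 1"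
    and "length (ins j u' u'' us) = Suc (length us)"
    and "length (cins j c cs) = Suc (length cs)"
proof -
  define xs where "xs = take j us"
  define ys where "ys = drop (Suc j) us"
  have us: "us = xs @ (u' @ c # u'') # ys"
    unfolding xs_def ys_def using id_take_nth_drop[OF j] uj by simp
  have lxs: "length xs = j" using j by (simp add: xs_def)
  have ins: "ins j u' u'' us = xs @ u' # u'' # ys" by (simp add: ins_def xs_def ys_def)
  define cxs where "cxs = take j cs"
  define cys where "cys = drop j cs"
  have lcxs: "length cxs = j" using j len by (simp add: cxs_def)
  have cs: "cs = cxs @ cys" by (simp add: cxs_def cys_def)
  have cins: "cins j c cs = cxs @ c # cys" by (simp add: cins_def cxs_def cys_def)
  have "word cs us = pw xs cxs @ word cys ((u' @ c # u'') # ys)"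
    unfolding us cs by (rule word_app) (simp add: lxs lcxs)
  also have "\<dots> = pw xs cxs @ (u' @ [c]) @ word cys (u'' # ys)"
    using word_split_hd[of cys "u' @ [c]" u'' ys] by simp
  also have "\<dots> = word (cins j c cs) (ins j u' u'' us)"
    unfolding cins ins by (subst word_app) (simp_all add: lxs lcxs)
  finally show "word (cins j c cs) (ins j u' u'' us) = word cs us" by simp
  show "length (ins j u' u'' us) = Suc (length us)" by (simp only: ins) (simp add: us)
  show "length (cins j c cs) = Suc (length cs)" by (simp only: cins) (simp add: cs)
  show "pos (ins j u' u'' us) (Suc j) = pos us j + length u' + 1"
    by (simp only: ins) (simp add: us pos_def lxs)
  fix k
  show "pos (ins j u' u'' us) (sh j k) = pos us k"
  proof (cases "k \<le> j")
    case True then show ?thesis by (simp only: ins) (simp add: us sh_def pos_def lxs)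
  next
    case False
    then obtain t where k: "k = Suc (j + t)" by (metis add_Suc_right le_add1 less_imp_Suc_add not_le)
    then show ?thesis by (simp only: ins) (simp add: us sh_def pos_def lxs)
  qed
qed

definition mrg :: "nat \<Rightarrow> 'a \<Rightarrow> 'a lang list \<Rightarrow> 'a lang list" where
  "mrg j c Ks = take j Ks @ conc (Ks ! j) (conc {[c]} (Ks ! Suc j)) # drop (Suc (Suc j)) Ks"

lemma lprod_app_iff: "length xs = length As \<Longrightarrow> (xs @ ys \<in> lprod (As @ Bs)) \<longleftrightarrow> xs \<in> lprod As \<and> ys \<in> lprod Bs"
proof (induction xs arbitrary: As)
  case Nil then show ?case by (simp add: lprod_Nil)
next
  case (Cons x xs)
  then obtain A As' where "As = A # As'" by (cases As) auto
  then show ?case using Cons by (simp add: lprod_Cons_iff)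
qed

lemma merge_lprod:
  assumes lK: "length Ks = Suc (Suc m)" and j: "j \<le> m"
  shows "{us. length us = Suc m \<and> (\<exists>u' u''. us ! j = u' @ c # u'' \<and> ins j u' u'' us \<in> lprod Ks)}
         = lprod (mrg j c Ks)"
proof (rule Set.set_eqI)
  fix us
  define As where "As = take j Ks"
  define Bs where "Bs = drop (Suc (Suc j)) Ks"
  have Ks: "Ks = As @ Ks ! j # Ks ! Suc j # Bs"
    unfolding As_def Bs_def using lK j
    by (metis Cons_nth_drop_Suc Suc_le_mono le_imp_less_Suc append_take_drop_id less_Suc_eq)
  have lAs: "length As = j" using lK j by (simp add: As_def)
  have mrg: "mrg j c Ks = As @ conc (Ks ! j) (conc {[c]} (Ks ! Suc j)) # Bs"
    by (simp add: mrg_def As_def Bs_def)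
  show "us \<in> {us. length us = Suc m \<and> (\<exists>u' u''. us ! j = u' @ c # u'' \<and> ins j u' u'' us \<in> lprod Ks)}
         \<longleftrightarrow> us \<in> lprod (mrg j c Ks)"
  proof (cases "length us = Suc m")
    case False
    then show ?thesis using lprod_length[of us "mrg j c Ks"] lK j by (auto simp: mrg_def)
  next
    case True
    define xs where "xs = take j us"
    define ys where "ys = drop (Suc j) us"
    have us: "us = xs @ us ! j # ys" unfolding xs_def ys_def using True j
      by (simp add: id_take_nth_drop)
    have lxs: "length xs = j" using True j by (simp add: xs_def)
    have insx: "\<And>u' u''. ins j u' u'' us = xs @ u' # u'' # ys" by (simp add: ins_def xs_def ys_def)
    have "(\<exists>u' u''. us ! j = u' @ c # u'' \<and> ins j u' u'' us \<in> lprod Ks) \<longleftrightarrow>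
          (\<exists>u' u''. us ! j = u' @ c # u'' \<and> xs \<in> lprod As \<and> u' \<in> Ks ! j \<and> u'' \<in> Ks ! Suc j \<and> ys \<in> lprod Bs)"
      unfolding insx by (subst Ks, subst lprod_app_iff) (simp_all add: lxs lAs lprod_Cons_iff)
    also have "\<dots> \<longleftrightarrow> xs \<in> lprod As \<and> us ! j \<in> conc (Ks ! j) (conc {[c]} (Ks ! Suc j)) \<and> ys \<in> lprod Bs"
      by (auto simp: conc_def)
    also have "\<dots> \<longleftrightarrow> us \<in> lprod (mrg j c Ks)"
      unfolding mrg by (subst us, subst lprod_app_iff) (simp_all add: lxs lAs lprod_Cons_iff)
    finally show ?thesis using True by simp
  qed
qed

lemma PU_merge:
  assumes "PU G (Suc (Suc m)) S" "j \<le> m"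
  shows "PU G (Suc m) {us. length us = Suc m \<and> (\<exists>u' u''. us ! j = u' @ c # u'' \<and> ins j u' u'' us \<in> S)}"
proof -
  obtain R where R: "finite R" "\<forall>Ks\<in>R. length Ks = Suc (Suc m) \<and> set Ks \<subseteq> SF G" "S = \<Union> (lprod ` R)"
    using assms(1) unfolding PU_def by blast
  have "{us. length us = Suc m \<and> (\<exists>u' u''. us ! j = u' @ c # u'' \<and> ins j u' u'' us \<in> S)} =
     (\<Union>Ks\<in>R. {us. length us = Suc m \<and> (\<exists>u' u''. us ! j = u' @ c # u'' \<and> ins j u' u'' us \<in> lprod Ks)})"
    using R(3) by blast
  also have "\<dots> = (\<Union>Ks\<in>R. lprod (mrg j c Ks))"
  proof (rule SUP_cong)
    fix Ks assume "Ks \<in> R"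
    then show "{us. length us = Suc m \<and> (\<exists>u' u''. us ! j = u' @ c # u'' \<and> ins j u' u'' us \<in> lprod Ks)} = lprod (mrg j c Ks)"
      using R(2) \<open>Ks \<in> R\<close> by (intro merge_lprod[OF _ assms(2)]) auto
  qed simp
  also have "\<dots> = \<Union> (lprod ` (mrg j c ` R))" by (simp add: image_image)
  finally have eq: "{us. length us = Suc m \<and> (\<exists>u' u''. us ! j = u' @ c # u'' \<and> ins j u' u'' us \<in> S)} =
     \<Union> (lprod ` (mrg j c ` R))" .
  have "\<forall>Ks\<in>mrg j c ` R. length Ks = Suc m \<and> set Ks \<subseteq> SF G"
  proof
    fix Ks' assume "Ks' \<in> mrg j c ` R"
    then obtain Ks where Ks: "Ks \<in> R" "Ks' = mrg j c Ks" by blast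
    then have l: "length Ks = Suc (Suc m)" and s: "set Ks \<subseteq> SF G" using R(2) by auto
    have "Ks ! j \<in> SF G" "Ks ! Suc j \<in> SF G" using l s assms(2) by (auto intro!: nth_mem[THEN subsetD[OF s]])
    then have "conc (Ks ! j) (conc {[c]} (Ks ! Suc j)) \<in> SF G" by (intro SF.concat SF.letter)
    moreover have "set (take j Ks) \<subseteq> SF G" "set (drop (Suc (Suc j)) Ks) \<subseteq> SF G"
      using s by (auto dest: in_set_takeD in_set_dropD)
    ultimately show "length Ks' = Suc m \<and> set Ks' \<subseteq> SF G" using Ks l assms(2) by (auto simp: mrg_def)
  qed
  then show ?thesis unfolding PU_def using eq R(1) by blast
qed


definition good :: "'a lang set \<Rightarrow> ('a list \<Rightarrow> (nat \<Rightarrow> nat) \<Rightarrow> bool) \<Rightarrow> bool" where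
  "good G P \<longleftrightarrow> (\<forall>m f (cs::'a list). (\<forall>x. f x \<le> Suc m) \<longrightarrow> length cs = m \<longrightarrow>
    PU G (Suc m) {us. length us = Suc m \<and> P (word cs us) (\<lambda>x. pos us (f x))})"

lemma goodI: "(\<And>m f (cs::'a list). (\<forall>x. f x \<le> Suc m) \<Longrightarrow> length cs = m \<Longrightarrow>
    PU G (Suc m) {us. length us = Suc m \<and> P (word cs us) (\<lambda>x. pos us (f x))}) \<Longrightarrow> good G P"
  unfolding good_def by blast

lemma goodD: "good G P \<Longrightarrow> (\<forall>x. f x \<le> Suc m) \<Longrightarrow> length (cs::'a list) = m \<Longrightarrow>
    PU G (Suc m) {us. length us = Suc m \<and> P (word cs us) (\<lambda>x. pos us (f x))}"
  unfolding good_def by blast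

lemma PU_const: "group_prevariety G \<Longrightarrow> PU G n {us. length us = n \<and> C}"
  using PU_all[of G n] PU_empty[of G n] by (cases C) (simp_all add: lists_n_def)

lemma good_not:
  assumes G: "group_prevariety G" and "good G (P :: 'a list \<Rightarrow> (nat \<Rightarrow> nat) \<Rightarrow> bool)"
  shows "good G (\<lambda>w \<sigma>. \<not> P w \<sigma>)"
proof (rule goodI)
  fix m and f :: "nat \<Rightarrow> nat" and cs :: "'a list" assume h: "\<forall>x. f x \<le> Suc m" "length cs = m"
  have "PU G (Suc m) {us. length us = Suc m \<and> P (word cs us) (\<lambda>x. pos us (f x))}"
    by (rule goodD[OF assms(2) h])
  then have "PU G (Suc m) (lists_n (Suc m) - {us. length us = Suc m \<and> P (word cs us) (\<lambda>x. pos us (f x))})"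
    by (rule PU_compl[OF G])
  moreover have "lists_n (Suc m) - {us. length us = Suc m \<and> P (word cs us) (\<lambda>x. pos us (f x))} =
    {us. length us = Suc m \<and> \<not> P (word cs us) (\<lambda>x. pos us (f x))}" by (auto simp: lists_n_def)
  ultimately show "PU G (Suc m) {us. length us = Suc m \<and> \<not> P (word cs us) (\<lambda>x. pos us (f x))}" by simp
qed

lemma good_and:
  assumes "good G (P :: 'a list \<Rightarrow> (nat \<Rightarrow> nat) \<Rightarrow> bool)" "good G Q"
  shows "good G (\<lambda>w \<sigma>. P w \<sigma> \<and> Q w \<sigma>)"
proof (rule goodI)
  fix m and f :: "nat \<Rightarrow> nat" and cs :: "'a list" assume h: "\<forall>x. f x \<le> Suc m" "length cs = m"
  have "PU G (Suc m) ({us. length us = Suc m \<and> P (word cs us) (\<lambda>x. pos us (f x))} \<inter>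
      {us. length us = Suc m \<and> Q (word cs us) (\<lambda>x. pos us (f x))})"
    using goodD[OF assms(1) h] goodD[OF assms(2) h] by (rule PU_inter)
  moreover have "{us. length us = Suc m \<and> P (word cs us) (\<lambda>x. pos us (f x))} \<inter>
      {us. length us = Suc m \<and> Q (word cs us) (\<lambda>x. pos us (f x))} =
      {us. length us = Suc m \<and> P (word cs us) (\<lambda>x. pos us (f x)) \<and> Q (word cs us) (\<lambda>x. pos us (f x))}"
    by auto
  ultimately show "PU G (Suc m) {us. length us = Suc m \<and> P (word cs us) (\<lambda>x. pos us (f x)) \<and> Q (word cs us) (\<lambda>x. pos us (f x))}"
    by simp
qed

lemma good_or:
  assumes "good G (P :: 'a list \<Rightarrow> (nat \<Rightarrow> nat) \<Rightarrow> bool)" "good G Q"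
  shows "good G (\<lambda>w \<sigma>. P w \<sigma> \<or> Q w \<sigma>)"
proof (rule goodI)
  fix m and f :: "nat \<Rightarrow> nat" and cs :: "'a list" assume h: "\<forall>x. f x \<le> Suc m" "length cs = m"
  have "PU G (Suc m) ({us. length us = Suc m \<and> P (word cs us) (\<lambda>x. pos us (f x))} \<union>
      {us. length us = Suc m \<and> Q (word cs us) (\<lambda>x. pos us (f x))})"
    using goodD[OF assms(1) h] goodD[OF assms(2) h] by (rule PU_union)
  moreover have "{us. length us = Suc m \<and> P (word cs us) (\<lambda>x. pos us (f x))} \<union>
      {us. length us = Suc m \<and> Q (word cs us) (\<lambda>x. pos us (f x))} =
      {us. length us = Suc m \<and> (P (word cs us) (\<lambda>x. pos us (f x)) \<or> Q (word cs us) (\<lambda>x. pos us (f x)))}"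
    by auto
  ultimately show "PU G (Suc m) {us. length us = Suc m \<and> (P (word cs us) (\<lambda>x. pos us (f x)) \<or> Q (word cs us) (\<lambda>x. pos us (f x)))}"
    by simp
qed

lemma length_cins: "j \<le> length cs \<Longrightarrow> length (cins j c cs) = Suc (length cs)"
  by (simp add: cins_def)

lemma good_ex:
  assumes G: "group_prevariety G" and A: "finite (UNIV :: 'a set)" and P: "good G (P :: 'a list \<Rightarrow> (nat \<Rightarrow> nat) \<Rightarrow> bool)"
  shows "good G (\<lambda>w \<sigma>. \<exists>i\<le>length w + 1. P w (\<sigma>(x := i)))"
proof (rule goodI)
  fix m and f :: "nat \<Rightarrow> nat" and cs :: "'a list" assume hf: "\<forall>x. f x \<le> Suc m" and hcs: "length cs = m"
  define f' where "f' j y = (if y = x then Suc j else sh j (f y))" for j y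
  define A where "A k = {us. length us = Suc m \<and> P (word cs us) (\<lambda>y. pos us ((f(x := k)) y))}" for k
  define S where "S j c = {vs. length vs = Suc (Suc m) \<and> P (word (cins j c cs) vs) (\<lambda>y. pos vs (f' j y))}" for j c
  define B where "B j c = {us. length us = Suc m \<and> (\<exists>u' u''. us ! j = u' @ c # u'' \<and> ins j u' u'' us \<in> S j c)}" for j c
  have PA: "PU G (Suc m) (A k)" if "k \<le> Suc m" for k
    unfolding A_def using that hf hcs by (intro goodD[OF P]) auto
  have PS: "PU G (Suc (Suc m)) (S j c)" if "j \<le> m" for j c
    unfolding S_def using that hf hcs
    by (intro goodD[OF P]) (auto simp: f'_def sh_def length_cins le_SucI)
  have PB: "PU G (Suc m) (B j c)" if "j \<le> m" for j c
    unfolding B_def using PS[OF that] that by (rule PU_merge)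
  have eq: "{us. length us = Suc m \<and> (\<exists>i\<le>length (word cs us) + 1. P (word cs us) ((\<lambda>y. pos us (f y))(x := i)))}
     = (\<Union>k\<in>{..Suc m}. A k) \<union> (\<Union>j\<in>{..m}. \<Union>c\<in>UNIV. B j c)"
  proof (rule Set.set_eqI, rule iffI)
    fix us
    assume "us \<in> {us. length us = Suc m \<and> (\<exists>i\<le>length (word cs us) + 1. P (word cs us) ((\<lambda>y. pos us (f y))(x := i)))}"
    then obtain i where lus: "length us = Suc m" and i: "i \<le> length (word cs us) + 1"
       and Pi: "P (word cs us) ((\<lambda>y. pos us (f y))(x := i))" by blast
    have lus': "length us = Suc (length cs)" using lus hcs by simp
    have "i \<le> pos us (length us)" using i pos_last[OF lus'] by simp
    from pos_decomp[OF this]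
    show "us \<in> (\<Union>k\<in>{..Suc m}. A k) \<union> (\<Union>j\<in>{..m}. \<Union>c\<in>UNIV. B j c)"
    proof
      assume "\<exists>k\<le>length us. i = pos us k"
      then obtain k where k: "k \<le> Suc m" "i = pos us k" using lus by auto
      have "(\<lambda>y. pos us (f y))(x := i) = (\<lambda>y. pos us ((f(x := k)) y))" using k by auto
      then have "us \<in> A k" using Pi lus by (simp add: A_def)
      moreover have "k \<in> {..Suc m}" using k by simp
      ultimately show ?thesis by blast
    next
      assume "\<exists>j<length us. \<exists>u' c u''. us ! j = u' @ c # u'' \<and> i = pos us j + length u' + 1"
      then obtain j u' c u'' where j: "j < length us" "us ! j = u' @ c # u''" "i = pos us j + length u' + 1"
        by blast
      note F = ins_facts[OF j(1) lus' j(2)]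
      have "(\<lambda>y. pos us (f y))(x := i) = (\<lambda>y. pos (ins j u' u'' us) (f' j y))"
        using F(2,3) j(3) by (auto simp: f'_def)
      then have "ins j u' u'' us \<in> S j c" using Pi F(1,4) lus by (simp add: S_def)
      then have "us \<in> B j c" using lus j(2) unfolding B_def by blast
      moreover have "j \<in> {..m}" using j(1) lus by simp
      ultimately show ?thesis by blast
    qed
  next
    fix us
    assume "us \<in> (\<Union>k\<in>{..Suc m}. A k) \<union> (\<Union>j\<in>{..m}. \<Union>c\<in>UNIV. B j c)"
    then show "us \<in> {us. length us = Suc m \<and> (\<exists>i\<le>length (word cs us) + 1. P (word cs us) ((\<lambda>y. pos us (f y))(x := i)))}"
    proof
      assume "us \<in> (\<Union>k\<in>{..Suc m}. A k)"
      then obtain k where k: "k \<le> Suc m" "us \<in> A k" by blast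
      then have lus: "length us = Suc m" by (simp add: A_def)
      have lus': "length us = Suc (length cs)" using lus hcs by simp
      have "pos us k \<le> pos us (length us)" using k lus by (cases "k = Suc m") (auto simp: less_imp_le)
      then have "pos us k \<le> length (word cs us) + 1" using pos_last[OF lus'] by simp
      moreover have "(\<lambda>y. pos us (f y))(x := pos us k) = (\<lambda>y. pos us ((f(x := k)) y))" by auto
      ultimately show ?thesis using k lus by (auto simp: A_def)
    next
      assume "us \<in> (\<Union>j\<in>{..m}. \<Union>c\<in>UNIV. B j c)"
      then obtain j c u' u'' where j: "j \<le> m" "length us = Suc m" "us ! j = u' @ c # u''" "ins j u' u'' us \<in> S j c"
        by (auto simp: B_def)
      have lus': "length us = Suc (length cs)" using j hcs by simp
      have jl: "j < length us" using j by simp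
      note F = ins_facts[OF jl lus' j(3)]
      define i where "i = pos us j + length u' + 1"
      have "i < pos us (Suc j)" using pos_nth_Suc[OF jl] j(3) by (simp add: i_def)
      also have "pos us (Suc j) \<le> pos us (length us)" using jl
        by (cases "Suc j = length us") (auto simp: less_imp_le)
      finally have "i \<le> length (word cs us) + 1" using pos_last[OF lus'] by simp
      moreover have "(\<lambda>y. pos us (f y))(x := i) = (\<lambda>y. pos (ins j u' u'' us) (f' j y))"
        using F(2,3) by (auto simp: f'_def i_def)
      ultimately show ?thesis using j(2,4) F(1) by (auto simp: S_def)
    qed
  qed
  have "PU G (Suc m) ((\<Union>k\<in>{..Suc m}. A k) \<union> (\<Union>j\<in>{..m}. \<Union>c\<in>UNIV. B j c))"
    using PA PB A by (intro PU_union PU_Union ballI) auto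
  then show "PU G (Suc m) {us. length us = Suc m \<and> (\<exists>i\<le>length (word cs us) + 1. P (word cs us) ((\<lambda>y. pos us (f y))(x := i)))}"
    using eq by simp
qed


fun tix :: "(nat \<Rightarrow> nat) \<Rightarrow> nat \<Rightarrow> fo_term \<Rightarrow> nat" where
  "tix f m (Var x) = f x"
| "tix f m Min = 0"
| "tix f m Max = Suc m"

lemma tval_pos:
  assumes "length us = Suc m" "length (cs :: 'a list) = m"
  shows "tval (word cs us) (\<lambda>x. pos us (f x)) t = pos us (tix f m t)"
  using pos_last[of us cs] assms by (cases t) auto

lemma tix_le: "\<forall>x. f x \<le> Suc m \<Longrightarrow> tix f m t \<le> Suc m"
  by (cases t) auto

lemma good_atom:
  assumes G: "group_prevariety G"
    and "\<And>m f (cs :: 'a list) us. \<forall>x. f x \<le> Suc m \<Longrightarrow> length cs = m \<Longrightarrow> length us = Suc m \<Longrightarrow>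
       P (word cs us) (\<lambda>x. pos us (f x)) = C m f cs"
  shows "good G (P :: 'a list \<Rightarrow> (nat \<Rightarrow> nat) \<Rightarrow> bool)"
proof (rule goodI)
  fix m and f :: "nat \<Rightarrow> nat" and cs :: "'a list" assume h: "\<forall>x. f x \<le> Suc m" "length cs = m"
  have "{us. length us = Suc m \<and> P (word cs us) (\<lambda>x. pos us (f x))} = {us. length us = Suc m \<and> C m f cs}"
    using assms(2)[OF h] by auto
  then show "PU G (Suc m) {us. length us = Suc m \<and> P (word cs us) (\<lambda>x. pos us (f x))}"
    using PU_const[OF G] by simp
qed

lemma good_pred:
  assumes G: "group_prevariety G" and A: "finite (UNIV :: 'a set)" and L: "(L :: 'a lang) \<in> G"
  shows "good G (\<lambda>w \<sigma>. sat w \<sigma> (Pred L t))"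
proof (rule goodI)
  fix m and f :: "nat \<Rightarrow> nat" and cs :: "'a list" assume h: "\<forall>x. f x \<le> Suc m" "length cs = m"
  define k where "k = tix f m t"
  have k: "k \<le> Suc m" using tix_le[OF h(1)] by (simp add: k_def)
  have eq: "sat (word cs us) (\<lambda>x. pos us (f x)) (Pred L t) \<longleftrightarrow>
            (1 \<le> k \<and> take k us \<in> {vs. length vs = Suc (length (take (k - 1) cs)) \<and> word (take (k - 1) cs) vs \<in> L})"
    if lus: "length us = Suc m" for us
  proof -
    have tv: "tval (word cs us) (\<lambda>x. pos us (f x)) t = pos us k"
      using tval_pos[OF lus h(2)] by (simp add: k_def)
    have pk: "0 < pos us k \<longleftrightarrow> 1 \<le> k" using pos_ge[of k us] by (cases k) auto
    show ?thesis
    proof (cases "1 \<le> k")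
      case False then show ?thesis using tv pk by (simp add: Let_def)
    next
      case True
      have "infix_word (word cs us) 0 (pos us k) = take (pos us k - 1) (word cs us)"
        by (simp add: infix_word_def)
      also have "\<dots> = word (take (k - 1) cs) (take k us)"
        using word_take_pos[of us cs k] lus h(2) True k by simp
      moreover have "length (take k us) = Suc (length (take (k - 1) cs))" using True lus k h(2) by simp
      ultimately show ?thesis using tv pk True by (simp add: Let_def)
    qed
  qed
  show "PU G (Suc m) {us. length us = Suc m \<and> sat (word cs us) (\<lambda>x. pos us (f x)) (Pred L t)}"
  proof (cases "1 \<le> k")
    case False
    then have "{us. length us = Suc m \<and> sat (word cs us) (\<lambda>x. pos us (f x)) (Pred L t)} = {us. length us = Suc m \<and> False}"
      using eq by blast
    then show ?thesis using PU_const[OF G, of "Suc m" False] by (simp only:)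
  next
    case True
    have LS: "L \<in> SF G" using L by (rule SF.base)
    have "PU G (Suc (length (take (k - 1) cs))) {vs. length vs = Suc (length (take (k - 1) cs)) \<and> word (take (k - 1) cs) vs \<in> L}"
      by (rule Fn[OF G A LS])
    moreover have "Suc (length (take (k - 1) cs)) = k" using True k h(2) by simp
    ultimately have "PU G (Suc m) {us. length us = Suc m \<and> take k us \<in> {vs. length vs = Suc (length (take (k - 1) cs)) \<and> word (take (k - 1) cs) vs \<in> L}}"
      using k by (intro PU_take[OF G]) simp_all
    moreover have "{us. length us = Suc m \<and> sat (word cs us) (\<lambda>x. pos us (f x)) (Pred L t)} =
       {us. length us = Suc m \<and> take k us \<in> {vs. length vs = Suc (length (take (k - 1) cs)) \<and> word (take (k - 1) cs) vs \<in> L}}"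
      using eq True by auto
    ultimately show ?thesis by simp
  qed
qed

lemma FO_good:
  assumes G: "group_prevariety G" and A: "finite (UNIV :: 'a set)"
  shows "preds (\<phi> :: 'a fo) \<subseteq> G \<Longrightarrow> good G (\<lambda>w \<sigma>. sat w \<sigma> \<phi>)"
proof (induction \<phi>)
  case (Eq s t)
  show ?case
    by (rule good_atom[OF G, where C = "\<lambda>m f cs. tix f m s = tix f m t"]) (simp add: tval_pos)
next
  case (Less s t)
  show ?case
    by (rule good_atom[OF G, where C = "\<lambda>m f cs. tix f m s < tix f m t"]) (simp add: tval_pos)
next
  case (Lab a t)
  show ?case
  proof (rule good_atom[OF G, where C = "\<lambda>m f cs. 1 \<le> tix f m t \<and> tix f m t \<le> m \<and> cs ! (tix f m t - 1) = a"])
    fix m and f :: "nat \<Rightarrow> nat" and cs :: "'a list" and us :: "'a list list"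
    assume h: "\<forall>x. f x \<le> Suc m" "length cs = m" "length us = Suc m"
    define k where "k = tix f m t"
    have k: "k \<le> Suc m" using tix_le[OF h(1)] by (simp add: k_def)
    have tv: "tval (word cs us) (\<lambda>x. pos us (f x)) t = pos us k"
      using tval_pos[OF h(3) h(2)] by (simp add: k_def)
    have pk: "1 \<le> pos us k \<longleftrightarrow> 1 \<le> k" using pos_ge[of k us] by (cases k) auto
    have lw: "pos us k \<le> length (word cs us) \<longleftrightarrow> k \<le> m"
    proof -
      have "length (word cs us) + 1 = pos us (Suc m)" using pos_last[of us cs] h by simp
      then have "pos us k \<le> length (word cs us) \<longleftrightarrow> pos us k < pos us (Suc m)" by linarith
      then show ?thesis by (simp add: less_Suc_eq_le)
    qed
    show "sat (word cs us) (\<lambda>x. pos us (f x)) (Lab a t) = (1 \<le> tix f m t \<and> tix f m t \<le> m \<and> cs ! (tix f m t - 1) = a)"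
      unfolding k_def[symmetric] using tv pk lw word_nth_pos[of us cs k] h
      by (auto simp: Let_def)
  qed
next
  case (Pred L t)
  then show ?case using good_pred[OF G A] by simp
next
  case (Neg \<phi>)
  then show ?case using good_not[OF G] by simp
next
  case (Conj \<phi>1 \<phi>2)
  then show ?case using good_and by simp
next
  case (Disj \<phi>1 \<phi>2)
  then show ?case using good_or by simp
next
  case (Ex x \<phi>)
  then show ?case using good_ex[OF G A, of "\<lambda>w \<sigma>. sat w \<sigma> \<phi>" x] by simp
next
  case (All x \<phi>)
  then have "good G (\<lambda>w \<sigma>. \<not> sat w \<sigma> \<phi>)" using good_not[OF G] by simp
  then have "good G (\<lambda>w \<sigma>. \<exists>i\<le>length w + 1. \<not> sat w (\<sigma>(x := i)) \<phi>)" by (rule good_ex[OF G A])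
  then have "good G (\<lambda>w \<sigma>. \<not> (\<exists>i\<le>length w + 1. \<not> sat w (\<sigma>(x := i)) \<phi>))" by (rule good_not[OF G])
  then show ?case by simp
qed

lemma FO_sub_SF:
  assumes G: "group_prevariety G" and A: "finite (UNIV :: 'a set)"
  shows "FO_less_P G \<subseteq> SF (G :: 'a lang set)"
proof
  fix K assume "K \<in> FO_less_P G"
  then obtain \<phi> :: "'a fo" where phi: "K = lang_of \<phi>" "preds \<phi> \<subseteq> G" by (auto simp: FO_less_P_def)
  have "PU G (Suc 0) {us. length us = Suc 0 \<and> sat (word [] us) (\<lambda>x. pos us ((\<lambda>_. 0) x)) \<phi>}"
    by (rule goodD[OF FO_good[OF G A phi(2)]]) simp_all
  then have "{u. [u] \<in> {us. length us = Suc 0 \<and> sat (word [] us) (\<lambda>x. pos us ((\<lambda>_. 0) x)) \<phi>}} \<in> SF G"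
    by (intro PU_1[OF G]) simp
  moreover have "{u. [u] \<in> {us. length us = Suc 0 \<and> sat (word [] us) (\<lambda>x. pos us ((\<lambda>_. 0) x)) \<phi>}} = lang_of \<phi>"
    by (simp add: lang_of_def)
  ultimately show "K \<in> SF G" using phi by simp
qed


definition seg :: "'a list \<Rightarrow> nat \<Rightarrow> nat \<Rightarrow> 'a list" where
  "seg w a b = take (b - a) (drop (a - 1) w)"

lemma seg_len: "1 \<le> a \<Longrightarrow> a \<le> b \<Longrightarrow> b \<le> length w + 1 \<Longrightarrow> length (seg w a b) = b - a"
  by (simp add: seg_def)

lemma seg_split: "1 \<le> a \<Longrightarrow> a \<le> i \<Longrightarrow> i \<le> b \<Longrightarrow> seg w a b = seg w a i @ seg w i b"
proof -
  assume h: "1 \<le> a" "a \<le> i" "i \<le> b"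
  have "b - a = (i - a) + (b - i)" using h by simp
  then have "seg w a b = take (i - a) (drop (a - 1) w) @ take (b - i) (drop (i - a) (drop (a - 1) w))"
    unfolding seg_def by (simp only: take_add)
  also have "drop (i - a) (drop (a - 1) w) = drop (i - 1) w" using h by simp
  finally show ?thesis by (simp add: seg_def)
qed

fun tv :: "fo_term \<Rightarrow> nat" where
  "tv (Var x) = x" | "tv Min = 0" | "tv Max = 0"

definition fresh :: "fo_term \<Rightarrow> fo_term \<Rightarrow> nat" where
  "fresh s t = tv s + tv t + 1"

lemma fresh_notin: "fresh s t \<notin> tvars s" "fresh s t \<notin> tvars t"
  by (cases s; cases t; simp add: fresh_def)+

lemma tval_upd: "z \<notin> tvars s \<Longrightarrow> tval w (\<sigma>(z := i)) s = tval w \<sigma> s"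
  by (cases s) auto

fun disjs :: "'a fo list \<Rightarrow> 'a fo" where
  "disjs [] = Neg (Eq Min Min)"
| "disjs (\<phi> # \<phi>s) = Disj \<phi> (disjs \<phi>s)"

lemma sat_disjs: "sat w \<sigma> (disjs \<phi>s) \<longleftrightarrow> (\<exists>\<phi>\<in>set \<phi>s. sat w \<sigma> \<phi>)"
  by (induction \<phi>s) auto

lemma free_disjs: "free_vars (disjs \<phi>s) = (\<Union>\<phi>\<in>set \<phi>s. free_vars \<phi>)"
  by (induction \<phi>s) auto

lemma preds_disjs: "preds (disjs \<phi>s) = (\<Union>\<phi>\<in>set \<phi>s. preds \<phi>)"
  by (induction \<phi>s) auto

definition defs_seg :: "'a lang set \<Rightarrow> 'a lang \<Rightarrow> fo_term \<Rightarrow> fo_term \<Rightarrow> 'a fo \<Rightarrow> bool" where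
  "defs_seg G K s t \<psi> \<longleftrightarrow> free_vars \<psi> \<subseteq> tvars s \<union> tvars t \<and> preds \<psi> \<subseteq> G \<and>
     (\<forall>w \<sigma>. 1 \<le> tval w \<sigma> s \<longrightarrow> tval w \<sigma> s \<le> tval w \<sigma> t \<longrightarrow> tval w \<sigma> t \<le> length w + 1 \<longrightarrow>
        (sat w \<sigma> \<psi> \<longleftrightarrow> seg w (tval w \<sigma> s) (tval w \<sigma> t) \<in> K))"

lemma base_key:
  assumes G: "group_prevariety G" and L: "L \<in> G"
  obtains R where "finite R" "\<And>r. lquot r {u. lquot u L = lquot [] L} \<in> G" "\<And>r. lquot r L \<in> G"
    "\<And>p s. s \<in> L \<longleftrightarrow> (\<exists>r\<in>R. p \<in> lquot r {u. lquot u L = lquot [] L} \<and> p @ s \<in> lquot r L)"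
proof -
  obtain M h F where gl: "grp_lang M h F L" using grp_lang_of[OF G L] .
  obtain R where R: "finite R" "\<forall>p. \<exists>r\<in>R. lquot (r @ p) L = L" using grp_lang.inv_words[OF gl] by blast
  have D: "{u. lquot u L = lquot [] L} \<in> G" using grp_lang.D_in[OF gl prev_of[OF G] L] .
  have L0: "lquot [] L = L" by (simp add: lquot_def)
  show ?thesis
  proof (rule that[OF R(1)])
    show "\<And>r. lquot r {u. lquot u L = lquot [] L} \<in> G" using prev_lquot[OF prev_of[OF G] D] .
    show "\<And>r. lquot r L \<in> G" using prev_lquot[OF prev_of[OF G] L] .
    fix p s
    show "s \<in> L \<longleftrightarrow> (\<exists>r\<in>R. p \<in> lquot r {u. lquot u L = lquot [] L} \<and> p @ s \<in> lquot r L)"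
    proof
      assume s: "s \<in> L"
      obtain r where r: "r \<in> R" "lquot (r @ p) L = L" using R(2) by blast
      have "p \<in> lquot r {u. lquot u L = lquot [] L}" using r(2) L0 by (simp add: lquot_def)
      moreover have "p @ s \<in> lquot r L" using r(2) s by (simp add: lquot_def set_eq_iff)
      ultimately show "\<exists>r\<in>R. p \<in> lquot r {u. lquot u L = lquot [] L} \<and> p @ s \<in> lquot r L" using r(1) by blast
    next
      assume "\<exists>r\<in>R. p \<in> lquot r {u. lquot u L = lquot [] L} \<and> p @ s \<in> lquot r L"
      then obtain r where "lquot (r @ p) L = L" "r @ p @ s \<in> L" using L0 by (auto simp: lquot_def)
      then show "s \<in> L" by (metis append.assoc lquot_def mem_Collect_eq)
    qed
  qed
qed

lemma SF_FO:
  assumes G: "group_prevariety G"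
  shows "(K :: 'a lang) \<in> SF G \<Longrightarrow> \<forall>s t. \<exists>\<psi>. defs_seg G K s t \<psi>"
proof (induction K rule: SF.induct)
  case (base L)
  obtain R where R: "finite R" "\<And>r. lquot r {u. lquot u L = lquot [] L} \<in> G" "\<And>r. lquot r L \<in> G"
    "\<And>p s. s \<in> L \<longleftrightarrow> (\<exists>r\<in>R. p \<in> lquot r {u. lquot u L = lquot [] L} \<and> p @ s \<in> lquot r L)"
    using base_key[OF G base] by blast
  obtain rs where rs: "set rs = R" using finite_list[OF R(1)] by blast
  show ?case
  proof (intro allI)
    fix s t
    let ?\<psi> = "disjs (map (\<lambda>r. Conj (Pred (lquot r {u. lquot u L = lquot [] L}) s) (Pred (lquot r L) t)) rs)"
    show "\<exists>\<psi>. defs_seg G L s t \<psi>"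
    proof (intro exI[of _ ?\<psi>])
      show "defs_seg G L s t ?\<psi>"
        unfolding defs_seg_def
      proof (intro conjI allI impI)
        show "free_vars ?\<psi> \<subseteq> tvars s \<union> tvars t" by (auto simp: free_disjs)
        show "preds ?\<psi> \<subseteq> G" using R(2,3) by (auto simp: preds_disjs)
        fix w :: "'a list" and \<sigma>
        assume h: "1 \<le> tval w \<sigma> s" "tval w \<sigma> s \<le> tval w \<sigma> t" "tval w \<sigma> t \<le> length w + 1"
        define a where "a = tval w \<sigma> s"
        define b where "b = tval w \<sigma> t"
        have pre: "infix_word w 0 a @ seg w a b = infix_word w 0 b"
        proof -
          have "b - 1 = (a - 1) + (b - a)" using h by (simp add: a_def b_def)
          then show ?thesis by (simp add: infix_word_def seg_def take_add)
        qed
        have "sat w \<sigma> ?\<psi> \<longleftrightarrow> (\<exists>r\<in>R. infix_word w 0 a \<in> lquot r {u. lquot u L = lquot [] L} \<and>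
                                     infix_word w 0 b \<in> lquot r L)"
          using h by (auto simp: sat_disjs rs a_def b_def Let_def)
        also have "\<dots> \<longleftrightarrow> seg w a b \<in> L" unfolding R(4)[of _ "infix_word w 0 a"] pre ..
        finally show "sat w \<sigma> ?\<psi> \<longleftrightarrow> seg w (tval w \<sigma> s) (tval w \<sigma> t) \<in> L" by (simp add: a_def b_def)
      qed
    qed
  qed
next
  case (letter c)
  show ?case
  proof (intro allI)
    fix s t
    define z where "z = fresh s t"
    let ?\<psi> = "Conj (Less s t) (Conj (Neg (Ex z (Conj (Less s (Var z)) (Less (Var z) t)))) (Lab c s)) :: 'a fo"
    show "\<exists>\<psi>. defs_seg G {[c]} s t \<psi>"
    proof (intro exI[of _ ?\<psi>])
      show "defs_seg G {[c]} s t ?\<psi>"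
        unfolding defs_seg_def
      proof (intro conjI allI impI)
        show "free_vars ?\<psi> \<subseteq> tvars s \<union> tvars t" by auto
        show "preds ?\<psi> \<subseteq> G" by simp
        fix w :: "'a list" and \<sigma>
        assume h: "1 \<le> tval w \<sigma> s" "tval w \<sigma> s \<le> tval w \<sigma> t" "tval w \<sigma> t \<le> length w + 1"
        define a where "a = tval w \<sigma> s"
        define b where "b = tval w \<sigma> t"
        have zs: "tval w (\<sigma>(z := i)) s = a" "tval w (\<sigma>(z := i)) t = b" for i
          unfolding z_def a_def b_def by (simp_all add: tval_upd fresh_notin)
        have "sat w \<sigma> ?\<psi> \<longleftrightarrow> a < b \<and> \<not> (\<exists>i\<le>length w + 1. a < i \<and> i < b) \<and> (1 \<le> a \<and> a \<le> length w \<and> w ! (a - 1) = c)"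
          using zs by (simp add: a_def b_def Let_def)
        also have "\<dots> \<longleftrightarrow> b = Suc a \<and> a \<le> length w \<and> w ! (a - 1) = c"
          using h by (auto simp: a_def b_def)
        also have "\<dots> \<longleftrightarrow> seg w a b = [c]"
        proof
          assume "b = Suc a \<and> a \<le> length w \<and> w ! (a - 1) = c"
          then show "seg w a b = [c]" using h(1)
            by (auto simp: seg_def a_def take_Suc_conv_app_nth)
        next
          assume sg: "seg w a b = [c]"
          then have "b - a = 1" using seg_len[of a b w] h by (simp add: a_def b_def)
          then have b: "b = Suc a" using h by (simp add: a_def b_def)
          have tk: "take 1 (drop (a - 1) w) = [c]" using sg \<open>b - a = 1\<close> by (simp add: seg_def)
          have ne: "a - 1 < length w"
          proof (rule ccontr)
            assume "\<not> a - 1 < length w"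
            then have "drop (a - 1) w = []" by simp
            then show False using tk by simp
          qed
          then have "drop (a - 1) w = w ! (a - 1) # drop (Suc (a - 1)) w" by (rule Cons_nth_drop_Suc[symmetric])
          then have "w ! (a - 1) = c" using tk by simp
          then show "b = Suc a \<and> a \<le> length w \<and> w ! (a - 1) = c" using b ne h(1) by (simp add: a_def)
        qed
        finally show "sat w \<sigma> ?\<psi> \<longleftrightarrow> seg w (tval w \<sigma> s) (tval w \<sigma> t) \<in> {[c]}" by (simp add: a_def b_def)
      qed
    qed
  qed
next
  case (union K L)
  show ?case
  proof (intro allI)
    fix s t
    obtain \<psi>1 \<psi>2 where "defs_seg G K s t \<psi>1" "defs_seg G L s t \<psi>2" using union.IH by blast
    then have "defs_seg G (K \<union> L) s t (Disj \<psi>1 \<psi>2)" by (auto simp: defs_seg_def)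
    then show "\<exists>\<psi>. defs_seg G (K \<union> L) s t \<psi>" by blast
  qed
next
  case (compl L)
  show ?case
  proof (intro allI)
    fix s t
    obtain \<psi> where "defs_seg G L s t \<psi>" using compl.IH by blast
    then have "defs_seg G (- L) s t (Neg \<psi>)" by (auto simp: defs_seg_def)
    then show "\<exists>\<psi>. defs_seg G (- L) s t \<psi>" by blast
  qed
next
  case (concat K L)
  show ?case
  proof (intro allI)
    fix s t
    define z where "z = fresh s t"
    obtain \<psi>1 where p1: "defs_seg G K s (Var z) \<psi>1" using concat.IH(1) by blast
    obtain \<psi>2 where p2: "defs_seg G L (Var z) t \<psi>2" using concat.IH(2) by blast
    let ?\<psi> = "Ex z (Conj (Disj (Less s (Var z)) (Eq s (Var z))) (Conj (Disj (Less (Var z) t) (Eq (Var z) t)) (Conj \<psi>1 \<psi>2)))"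
    have "defs_seg G (conc K L) s t ?\<psi>"
      unfolding defs_seg_def
    proof (intro conjI allI impI)
      show "free_vars ?\<psi> \<subseteq> tvars s \<union> tvars t" using p1 p2 by (auto simp: defs_seg_def)
      show "preds ?\<psi> \<subseteq> G" using p1 p2 by (auto simp: defs_seg_def)
      fix w :: "'a list" and \<sigma>
      assume h: "1 \<le> tval w \<sigma> s" "tval w \<sigma> s \<le> tval w \<sigma> t" "tval w \<sigma> t \<le> length w + 1"
      define a where "a = tval w \<sigma> s"
      define b where "b = tval w \<sigma> t"
      have zs: "tval w (\<sigma>(z := i)) s = a" "tval w (\<sigma>(z := i)) t = b" for i
        unfolding z_def a_def b_def by (simp_all add: tval_upd fresh_notin)
      have s1: "sat w (\<sigma>(z := i)) \<psi>1 \<longleftrightarrow> seg w a i \<in> K" if "a \<le> i" "i \<le> b" for i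
        using p1 zs[of i] that h unfolding defs_seg_def a_def b_def by auto
      have s2: "sat w (\<sigma>(z := i)) \<psi>2 \<longleftrightarrow> seg w i b \<in> L" if "a \<le> i" "i \<le> b" for i
        using p2 zs[of i] that h unfolding defs_seg_def a_def b_def by auto
      have "sat w \<sigma> ?\<psi> \<longleftrightarrow> (\<exists>i\<le>length w + 1. a \<le> i \<and> i \<le> b \<and> sat w (\<sigma>(z := i)) \<psi>1 \<and> sat w (\<sigma>(z := i)) \<psi>2)"
        using zs by auto
      also have "\<dots> \<longleftrightarrow> (\<exists>i. a \<le> i \<and> i \<le> b \<and> seg w a i \<in> K \<and> seg w i b \<in> L)"
        using s1 s2 h by (auto simp: b_def) (meson le_trans)
      also have "\<dots> \<longleftrightarrow> seg w a b \<in> conc K L"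
      proof
        assume "\<exists>i. a \<le> i \<and> i \<le> b \<and> seg w a i \<in> K \<and> seg w i b \<in> L"
        then obtain i where i: "a \<le> i" "i \<le> b" "seg w a i \<in> K" "seg w i b \<in> L" by blast
        then have "seg w a b = seg w a i @ seg w i b" using h(1) by (intro seg_split) (simp_all add: a_def)
        then show "seg w a b \<in> conc K L" using i unfolding conc_def by blast
      next
        assume "seg w a b \<in> conc K L"
        then obtain u v where uv: "seg w a b = u @ v" "u \<in> K" "v \<in> L" unfolding conc_def by blast
        define i where "i = a + length u"
        have lab: "length (seg w a b) = b - a" using h by (intro seg_len) (simp_all add: a_def b_def)
        then have i: "a \<le> i" "i \<le> b" using uv(1) h by (auto simp: i_def a_def b_def)
        have sp: "seg w a b = seg w a i @ seg w i b" using i h(1) by (intro seg_split) (simp_all add: a_def)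
        have "length (seg w a i) = length u" using i h by (subst seg_len) (simp_all add: i_def a_def b_def)
        then have "seg w a i = u \<and> seg w i b = v" using sp uv(1) by (simp add: append_eq_append_conv)
        then show "\<exists>i. a \<le> i \<and> i \<le> b \<and> seg w a i \<in> K \<and> seg w i b \<in> L" using i uv by blast
      qed
      finally show "sat w \<sigma> ?\<psi> \<longleftrightarrow> seg w (tval w \<sigma> s) (tval w \<sigma> t) \<in> conc K L" by (simp add: a_def b_def)
    qed
    then show "\<exists>\<psi>. defs_seg G (conc K L) s t \<psi>" by blast
  qed
qed

lemma SF_sub_FO:
  assumes G: "group_prevariety G"
  shows "SF G \<subseteq> FO_less_P (G :: 'a lang set)"
proof
  fix K :: "'a lang" assume K: "K \<in> SF G"
  obtain \<psi> where p: "defs_seg G K (Var 0) Max \<psi>" using SF_FO[OF G K] by blast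
  let ?\<chi> = "Ex 0 (Conj (Conj (Less Min (Var 0)) (Neg (Ex 1 (Conj (Less Min (Var 1)) (Less (Var 1) (Var 0)))))) \<psi>)"
  have fv: "free_vars ?\<chi> = {}" using p by (auto simp: defs_seg_def)
  have pr: "preds ?\<chi> \<subseteq> G" using p by (simp add: defs_seg_def)
  have "lang_of ?\<chi> = K"
  proof (rule Set.set_eqI)
    fix w :: "'a list"
    have one: "(0 < i \<and> \<not> (\<exists>j\<le>length w + 1. 0 < j \<and> j < i)) \<longleftrightarrow> i = 1" if "i \<le> length w + 1" for i :: nat
      using that by (cases i) (auto intro: exI[of _ 1])
    have "w \<in> lang_of ?\<chi> \<longleftrightarrow> (\<exists>i\<le>length w + 1. (0 < i \<and> \<not> (\<exists>j\<le>length w + 1. 0 < j \<and> j < i)) \<and> sat w ((\<lambda>_. 0)(0 := i)) \<psi>)"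
      by (simp add: lang_of_def)
    also have "\<dots> \<longleftrightarrow> sat w ((\<lambda>_. 0)(0 := 1)) \<psi>" using one by auto
    also have "\<dots> \<longleftrightarrow> seg w 1 (length w + 1) \<in> K" using p unfolding defs_seg_def by simp
    also have "seg w 1 (length w + 1) = w" by (simp add: seg_def)
    finally show "w \<in> lang_of ?\<chi> \<longleftrightarrow> w \<in> K" .
  qed
  then show "K \<in> FO_less_P G" using fv pr unfolding FO_less_P_def by blast
qed

theorem corollary6p6:
  fixes G :: "'a lang set"
  assumes "finite (UNIV :: 'a set)"
    and "group_prevariety G"
  shows "SF G = FO_less_P G"
  using SF_sub_FO[OF assms(2)] FO_sub_SF[OF assms(2,1)] by blast

end
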